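(* Let $d\in\mathbb N$ and let $\mu_0$ be a probability measure on $\mathbb R^d$ with Lebesgue density $\pi_0$; set $S_0=\{\pi_0>0\}$. For each $n\in\mathbb N$ let $\Phi_n:S_0\to\mathbb R$ with $Z_n=\int_{S_0}\exp(-n\Phi_n)\,d\mu_0\in(0,\infty)$, $\mu_n(dx)=Z_n^{-1}\exp(-n\Phi_n(x))\mu_0(dx)$ and $I_n=\Phi_n-\frac1n\log\pi_0$ on $S_0$. Assume: (A1) For every $n$, $\Phi_n,\pi_0\in C^2(S_0,\mathbb R)$, and $I_n$ has a unique minimizer $x_n\in S_0$ with $I_n(x_n)=0$, $\nabla I_n(x_n)=0$, $\nabla^2I_n(x_n)$ positive definite. (A2) $\Phi_n,\pi_0\in C^3(S_0,\mathbb R)$ for all $n$, and (i) $x_\star=\lim x_n$ and $H_\star=\lim\nabla^2\Phi_n(x_n)$ exist, $H_\star$ is positive definite, $x_\star$ is in the interior of $S_0$; (ii) for each $r>0$ there exist $n_r$, $\delta_r>0$, $K_r<\infty$ such that for all $n\ge n_r$: $I_n(x)\ge\delta_r$ for all $x\in S_0$ with $\|x-x_n\|>r$, and $\|\nabla^3\log\pi_0(x)\|\le K_r$, $\|\nabla^3\Phi_n(x)\|\le K_r$ for all $x\in S_0$ with $\|x\|\le r$; (iii) there exist $n_0$, $\epsilon\in(0,1)$ and $q:S_0\to[0,\infty)$ with $\exp(-nI_n(x))\le q(x)$ for all $x\in S_0$, $n\ge n_0$, and $\int_{S_0}q^{1-\epsilon}\,dx<\infty$. Let $C_n^{-1}=\nabla^2I_n(x_n)$,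 $\mathcal L_{\mu_n}=\mathcal N(x_n,n^{-1}C_n)$, and define $\pi_n(x)=\exp(-n\Phi_n(x))\pi_0(x)$ for $x\in S_0$, $\pi_n(x)=0$ otherwise, and $\tilde\pi_n(x)=\exp\!\big(-\frac n2(x-x_n)^\top C_n^{-1}(x-x_n)\big)$ for $x\in\mathbb R^d$. Then for every $p\in\mathbb N$, $$\int_{\mathbb R^d}\Big|\Big(\frac{\pi_n(x)}{\tilde\pi_n(x)}\Big)^{1/p}-1\Big|^p\,\mathcal L_{\mu_n}(dx)\in\mathcal O(n^{-p/2})\quad(n\to\infty).$$ *)

theory Defs
  imports "HOL-Analysis.Analysis" "HOL-Library.Landau_Symbols"
begin

text \<open>Frechet derivative as a bounded linear operator, so that it can be iterated:
  Df x : 'a =>L 'b,  D(D f) x : 'a =>L ('a =>L 'b) (Hessian as bilinear form), etc.\<close>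
definition Dfr :: "('a::real_normed_vector \<Rightarrow> 'b::real_normed_vector) \<Rightarrow> 'a \<Rightarrow> ('a \<Rightarrow>\<^sub>L 'b)" where
  "Dfr f x = Blinfun (frechet_derivative f (at x))"

definition C2_on :: "'a::real_normed_vector set \<Rightarrow> ('a \<Rightarrow> real) \<Rightarrow> bool" where
  "C2_on U f \<longleftrightarrow> open U \<and> (\<forall>x\<in>U. f differentiable (at x)) \<and>
     (\<forall>x\<in>U. Dfr f differentiable (at x)) \<and> continuous_on U (Dfr (Dfr f))"

definition C3_on :: "'a::real_normed_vector set \<Rightarrow> ('a \<Rightarrow> real) \<Rightarrow> bool" where
  "C3_on U f \<longleftrightarrow> C2_on U f \<and> (\<forall>x\<in>U. Dfr (Dfr f) differentiable (at x)) \<and>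
     continuous_on U (Dfr (Dfr (Dfr f)))"

definition pos_def_form :: "('a::real_normed_vector \<Rightarrow>\<^sub>L 'a \<Rightarrow>\<^sub>L real) \<Rightarrow> bool" where
  "pos_def_form H \<longleftrightarrow> (\<forall>v. v \<noteq> 0 \<longrightarrow> blinfun_apply (blinfun_apply H v) v > 0)"

end

theory Submission
  imports Defs
begin

lemma Dfr_has: "(f has_derivative f') (at x) \<Longrightarrow> Dfr f x = Blinfun f'"
  unfolding Dfr_def using frechet_derivative_at by metis

lemma Dfr_apply: "(f has_derivative f') (at x) \<Longrightarrow> blinfun_apply (Dfr f x) = f'"
  by (simp add: Dfr_has bounded_linear_Blinfun_apply has_derivative_bounded_linear)

lemma Dfr_works: "f differentiable at x \<Longrightarrow> (f has_derivative blinfun_apply (Dfr f x)) (at x)"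
  by (metis Dfr_apply frechet_derivative_works)

lemma Dfr_local:
  assumes "open U" "x \<in> U" "\<And>y. y \<in> U \<Longrightarrow> f y = g y"
  shows "Dfr f x = Dfr g x"
proof -
  have "(\<lambda>f'. (f has_derivative f') (at x)) = (\<lambda>f'. (g has_derivative f') (at x))"
    using assms by (intro ext iffI) (auto intro: has_derivative_transform_within_open)
  then show ?thesis unfolding Dfr_def frechet_derivative_def by simp
qed

lemma diff_local:
  assumes "f differentiable at x" "open U" "x \<in> U" "\<And>y. y \<in> U \<Longrightarrow> f y = g y"
  shows "g differentiable at x"
  using assms unfolding differentiable_def
  by (meson has_derivative_transform_within_open)

lemma Dfr_lin:
  fixes f g :: "'a::real_normed_vector \<Rightarrow> 'b::real_normed_vector"
  assumes "f differentiable at x" "g differentiable at x"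
  shows "Dfr (\<lambda>z. f z - c *\<^sub>R g z) x = Dfr f x - c *\<^sub>R Dfr g x"
    and "(\<lambda>z. f z - c *\<^sub>R g z) differentiable at x"
proof -
  have d: "((\<lambda>z. f z - c *\<^sub>R g z) has_derivative (\<lambda>h. Dfr f x h - c *\<^sub>R Dfr g x h)) (at x)"
    using Dfr_works[OF assms(1)] Dfr_works[OF assms(2)]
    by (intro derivative_intros) auto
  have bl: "bounded_linear (\<lambda>h. Dfr f x h - c *\<^sub>R Dfr g x h)"
    using d has_derivative_bounded_linear by blast
  show "Dfr (\<lambda>z. f z - c *\<^sub>R g z) x = Dfr f x - c *\<^sub>R Dfr g x"
    unfolding Dfr_has[OF d]
    by (rule blinfun_eqI) (simp add: bounded_linear_Blinfun_apply[OF bl] blinfun.diff_left blinfun.scaleR_left)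
  show "(\<lambda>z. f z - c *\<^sub>R g z) differentiable at x"
    using d by (rule differentiableI)
qed

definition D3 :: "'a::real_normed_vector set \<Rightarrow> ('a \<Rightarrow> real) \<Rightarrow> bool" where
  "D3 U f \<longleftrightarrow> open U \<and> (\<forall>y\<in>U. f differentiable at y \<and> Dfr f differentiable at y \<and>
      Dfr (Dfr f) differentiable at y)"

lemma C3_D3: "C3_on U f \<Longrightarrow> D3 U f"
  unfolding C3_on_def C2_on_def D3_def by auto

lemma D3_lin:
  fixes f g :: "'a::real_normed_vector \<Rightarrow> real" and c :: real
  assumes f: "D3 U f" and g: "D3 U g"
  shows "D3 U (\<lambda>z. f z - c *\<^sub>R g z)"
    and "\<And>y. y \<in> U \<Longrightarrow> Dfr (\<lambda>z. f z - c *\<^sub>R g z) y = Dfr f y - c *\<^sub>R Dfr g y"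
    and "\<And>y. y \<in> U \<Longrightarrow> Dfr (Dfr (\<lambda>z. f z - c *\<^sub>R g z)) y = Dfr (Dfr f) y - c *\<^sub>R Dfr (Dfr g) y"
    and "\<And>y. y \<in> U \<Longrightarrow> Dfr (Dfr (Dfr (\<lambda>z. f z - c *\<^sub>R g z))) y = Dfr (Dfr (Dfr f)) y - c *\<^sub>R Dfr (Dfr (Dfr g)) y"
proof -
  define h where "h = (\<lambda>z. f z - c *\<^sub>R g z)"
  have U: "open U" using f unfolding D3_def by blast
  have fd: "\<And>y. y \<in> U \<Longrightarrow> f differentiable at y \<and> Dfr f differentiable at y \<and> Dfr (Dfr f) differentiable at y"
    using f unfolding D3_def by blast
  have gd: "\<And>y. y \<in> U \<Longrightarrow> g differentiable at y \<and> Dfr g differentiable at y \<and> Dfr (Dfr g) differentiable at y"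
    using g unfolding D3_def by blast
  have L1: "Dfr h y = Dfr f y - c *\<^sub>R Dfr g y" "h differentiable at y" if "y \<in> U" for y
    using Dfr_lin[of f y g c] fd[OF that] gd[OF that] unfolding h_def by blast+
  have L2: "Dfr (Dfr h) y = Dfr (Dfr f) y - c *\<^sub>R Dfr (Dfr g) y" "Dfr h differentiable at y"
    if "y \<in> U" for y
  proof -
    have e: "\<And>z. z \<in> U \<Longrightarrow> Dfr h z = Dfr f z - c *\<^sub>R Dfr g z" using L1 by blast
    have "Dfr (Dfr h) y = Dfr (\<lambda>z. Dfr f z - c *\<^sub>R Dfr g z) y"
      by (rule Dfr_local[OF U that e])
    also have "\<dots> = Dfr (Dfr f) y - c *\<^sub>R Dfr (Dfr g) y"
      using Dfr_lin[of "Dfr f" y "Dfr g" c] fd[OF that] gd[OF that] by blast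
    finally show "Dfr (Dfr h) y = Dfr (Dfr f) y - c *\<^sub>R Dfr (Dfr g) y" .
    have "(\<lambda>z. Dfr f z - c *\<^sub>R Dfr g z) differentiable at y"
      using Dfr_lin(2)[of "Dfr f" y "Dfr g" c] fd[OF that] gd[OF that] by blast
    then show "Dfr h differentiable at y"
      by (rule diff_local[OF _ U that]) (simp add: e)
  qed
  have L3: "Dfr (Dfr (Dfr h)) y = Dfr (Dfr (Dfr f)) y - c *\<^sub>R Dfr (Dfr (Dfr g)) y"
    "Dfr (Dfr h) differentiable at y" if "y \<in> U" for y
  proof -
    have e: "\<And>z. z \<in> U \<Longrightarrow> Dfr (Dfr h) z = Dfr (Dfr f) z - c *\<^sub>R Dfr (Dfr g) z" using L2 by blast
    have "Dfr (Dfr (Dfr h)) y = Dfr (\<lambda>z. Dfr (Dfr f) z - c *\<^sub>R Dfr (Dfr g) z) y"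
      by (rule Dfr_local[OF U that e])
    also have "\<dots> = Dfr (Dfr (Dfr f)) y - c *\<^sub>R Dfr (Dfr (Dfr g)) y"
      using Dfr_lin[of "Dfr (Dfr f)" y "Dfr (Dfr g)" c] fd[OF that] gd[OF that] by blast
    finally show "Dfr (Dfr (Dfr h)) y = Dfr (Dfr (Dfr f)) y - c *\<^sub>R Dfr (Dfr (Dfr g)) y" .
    have "(\<lambda>z. Dfr (Dfr f) z - c *\<^sub>R Dfr (Dfr g) z) differentiable at y"
      using Dfr_lin(2)[of "Dfr (Dfr f)" y "Dfr (Dfr g)" c] fd[OF that] gd[OF that] by blast
    then show "Dfr (Dfr h) differentiable at y"
      by (rule diff_local[OF _ U that]) (simp add: e)
  qed
  show "D3 U (\<lambda>z. f z - c *\<^sub>R g z)" unfolding D3_def h_def[symmetric] using U L1 L2 L3 by blast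
  show "\<And>y. y \<in> U \<Longrightarrow> Dfr (\<lambda>z. f z - c *\<^sub>R g z) y = Dfr f y - c *\<^sub>R Dfr g y"
    using L1 unfolding h_def by blast
  show "\<And>y. y \<in> U \<Longrightarrow> Dfr (Dfr (\<lambda>z. f z - c *\<^sub>R g z)) y = Dfr (Dfr f) y - c *\<^sub>R Dfr (Dfr g) y"
    using L2 unfolding h_def by blast
  show "\<And>y. y \<in> U \<Longrightarrow> Dfr (Dfr (Dfr (\<lambda>z. f z - c *\<^sub>R g z))) y = Dfr (Dfr (Dfr f)) y - c *\<^sub>R Dfr (Dfr (Dfr g)) y"
    using L3 unfolding h_def by blast
qed



lemma D3_ln:
  fixes P :: "'a::real_normed_vector \<Rightarrow> real"
  assumes P: "D3 U P" and pos: "\<And>y. y \<in> U \<Longrightarrow> P y > 0"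
  shows "D3 U (\<lambda>z. ln (P z))"
proof -
  have U: "open U" using P unfolding D3_def by blast
  have Pd: "\<And>y. y \<in> U \<Longrightarrow> P differentiable at y \<and> Dfr P differentiable at y \<and> Dfr (Dfr P) differentiable at y"
    using P unfolding D3_def by blast
  define E1 where "E1 = (\<lambda>z. inverse (P z) *\<^sub>R Dfr P z)"
  define E2 where "E2 = (\<lambda>z. inverse (P z) *\<^sub>R Dfr (Dfr P) z +
      (- (inverse (P z) * inverse (P z))) *\<^sub>R (blinfun_scaleR_left (Dfr P z) o\<^sub>L Dfr P z))"
  have l1: "((\<lambda>z. ln (P z)) has_derivative (\<lambda>h. Dfr P y h * inverse (P y))) (at y)"
    "(\<lambda>z. ln (P z)) differentiable at y" if "y \<in> U" for y
  proof -
    show "((\<lambda>z. ln (P z)) has_derivative (\<lambda>h. Dfr P y h * inverse (P y))) (at y)"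
      using Dfr_works[of P y] Pd[OF that] pos[OF that] by (intro has_derivative_ln) auto
    then show "(\<lambda>z. ln (P z)) differentiable at y" by (rule differentiableI)
  qed
  have e1: "Dfr (\<lambda>z. ln (P z)) y = E1 y" if "y \<in> U" for y
  proof -
    have bl: "bounded_linear (\<lambda>h. Dfr P y h * inverse (P y))"
      using l1(1)[OF that] has_derivative_bounded_linear by blast
    show ?thesis unfolding Dfr_has[OF l1(1)[OF that]] E1_def
      by (rule blinfun_eqI) (simp add: bounded_linear_Blinfun_apply[OF bl] blinfun.scaleR_left)
  qed
  have d1: "(E1 has_derivative (\<lambda>h. inverse (P y) *\<^sub>R Dfr (Dfr P) y h +
      (- (inverse (P y) * Dfr P y h * inverse (P y))) *\<^sub>R Dfr P y)) (at y)" if "y \<in> U" for y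
    unfolding E1_def
    using Dfr_works[of P y] Dfr_works[of "Dfr P" y] Pd[OF that] pos[OF that]
    by (intro derivative_eq_intros) auto
  have e2: "Dfr E1 y = E2 y" if "y \<in> U" for y
  proof -
    have bl: "bounded_linear (\<lambda>h. inverse (P y) *\<^sub>R Dfr (Dfr P) y h +
      (- (inverse (P y) * Dfr P y h * inverse (P y))) *\<^sub>R Dfr P y)"
      using d1[OF that] has_derivative_bounded_linear by blast
    show ?thesis unfolding E2_def
      by (rule blinfun_eqI) (simp add: Dfr_apply[OF d1[OF that]] blinfun.add_left blinfun.diff_left scaleR_scaleR
           blinfun.scaleR_left power2_eq_square algebra_simps)
  qed
  have d2: "E2 differentiable at y" if "y \<in> U" for y
  proof -
    have a: "((\<lambda>z. blinfun_scaleR_left (Dfr P z)) has_derivative (\<lambda>h. blinfun_scaleR_left (Dfr (Dfr P) y h))) (at y)"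
      using Dfr_works[of "Dfr P" y] Pd[OF that]
      by (intro bounded_linear.has_derivative[OF bounded_linear_blinfun_scaleR_left]) auto
    have b: "((\<lambda>z. blinfun_scaleR_left (Dfr P z) o\<^sub>L Dfr P z) has_derivative
       (\<lambda>h. (blinfun_scaleR_left (Dfr P y) o\<^sub>L Dfr (Dfr P) y h) + (blinfun_scaleR_left (Dfr (Dfr P) y h) o\<^sub>L Dfr P y))) (at y)"
      using Dfr_works[of "Dfr P" y] Pd[OF that]
      by (intro bounded_bilinear.FDERIV[OF bounded_bilinear_blinfun_compose] a) auto
    have c: "(\<lambda>z. blinfun_scaleR_left (Dfr P z) o\<^sub>L Dfr P z) differentiable at y"
      using b by (rule differentiableI)
    have i: "(\<lambda>z. inverse (P z)) differentiable at y"
      using Pd[OF that] pos[OF that] by (intro differentiable_inverse) auto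
    show ?thesis
      unfolding E2_def
      using Pd[OF that] i c by (intro differentiable_add differentiable_scaleR differentiable_minus differentiable_mult) auto
  qed
  have dE1: "E1 differentiable at y" if "y \<in> U" for y using d1[OF that] by (rule differentiableI)
  have dd1: "Dfr (\<lambda>z. ln (P z)) differentiable at y" if "y \<in> U" for y
    by (rule diff_local[OF dE1[OF that] U that]) (simp add: e1)
  have e2': "Dfr (Dfr (\<lambda>z. ln (P z))) y = E2 y" if "y \<in> U" for y
    using Dfr_local[OF U that e1] e2[OF that] by simp
  have dd2: "Dfr (Dfr (\<lambda>z. ln (P z))) differentiable at y" if "y \<in> U" for y
    by (rule diff_local[OF d2[OF that] U that]) (simp add: e2')
  show ?thesis unfolding D3_def using U l1(2) dd1 dd2 by blast
qed

lemma line_deriv: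
  fixes F :: "'a::real_normed_vector \<Rightarrow> 'b::real_normed_vector"
  assumes "F differentiable at (x + t *\<^sub>R h)" "bounded_linear L"
  shows "((\<lambda>t. L (F (x + t *\<^sub>R h))) has_real_derivative (L (Dfr F (x + t *\<^sub>R h) h))) (at t)"
proof -
  have a: "((\<lambda>t. x + t *\<^sub>R h) has_derivative (\<lambda>s. s *\<^sub>R h)) (at t)"
    by (intro derivative_eq_intros) auto
  have b: "((\<lambda>t. F (x + t *\<^sub>R h)) has_derivative (\<lambda>s. Dfr F (x + t *\<^sub>R h) (s *\<^sub>R h))) (at t)"
    using has_derivative_compose[OF a Dfr_works[OF assms(1)]] by (simp add: o_def)
  have c: "((\<lambda>t. L (F (x + t *\<^sub>R h))) has_derivative (\<lambda>s. L (Dfr F (x + t *\<^sub>R h) (s *\<^sub>R h)))) (at t)"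
    by (rule bounded_linear.has_derivative[OF assms(2) b])
  have e: "(\<lambda>s. L (Dfr F (x + t *\<^sub>R h) (s *\<^sub>R h))) = (*) (L (Dfr F (x + t *\<^sub>R h) h))"
    by (rule ext) (simp add: blinfun.scaleR_right linear_scale[OF bounded_linear.linear[OF assms(2)]])
  show ?thesis unfolding has_field_derivative_def
    using c by (simp only: e)
qed



lemma taylor3:
  fixes f :: "'a::real_normed_vector \<Rightarrow> real"
  assumes D: "D3 U f" and seg: "\<And>t. 0 \<le> t \<Longrightarrow> t \<le> 1 \<Longrightarrow> x + t *\<^sub>R h \<in> U"
    and bnd: "\<And>t. 0 \<le> t \<Longrightarrow> t \<le> 1 \<Longrightarrow> norm (Dfr (Dfr (Dfr f)) (x + t *\<^sub>R h)) \<le> K"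
  shows "\<bar>f (x + h) - f x - Dfr f x h - Dfr (Dfr f) x h h / 2\<bar> \<le> K * norm h ^ 3 / 6"
proof -
  define diff where "diff = (\<lambda>(m::nat) (t::real). if m = 0 then f (x + t *\<^sub>R h) else if m = 1 then Dfr f (x + t *\<^sub>R h) h
     else if m = 2 then Dfr (Dfr f) (x + t *\<^sub>R h) h h else Dfr (Dfr (Dfr f)) (x + t *\<^sub>R h) h h h)"
  have Dd: "f differentiable at y \<and> Dfr f differentiable at y \<and> Dfr (Dfr f) differentiable at y" if "y \<in> U" for y
    using D that unfolding D3_def by blast
  have bl1: "bounded_linear (\<lambda>B::'a \<Rightarrow>\<^sub>L real. blinfun_apply B h)" by simp
  have bl2: "bounded_linear (\<lambda>B::'a \<Rightarrow>\<^sub>L 'a \<Rightarrow>\<^sub>L real. blinfun_apply (blinfun_apply B h) h)"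
    using bounded_linear_compose[OF bl1 bounded_linear_apply_blinfun[of h]] by (simp add: o_def)
  have der: "DERIV (diff m) t :> diff (Suc m) t" if "m < 3" "0 \<le> t" "t \<le> 1" for m t
  proof -
    have U: "x + t *\<^sub>R h \<in> U" using seg that by auto
    have "m = 0 \<or> m = 1 \<or> m = 2" using that(1) by linarith
    then consider "m = 0" | "m = 1" | "m = 2" by blast
    then show ?thesis
    proof cases
      case 1
      then show ?thesis using line_deriv[of f x t h "\<lambda>y. y"] Dd[OF U] unfolding diff_def
        by (simp add: bounded_linear_ident)
    next
      case 2
      then show ?thesis using line_deriv[OF _ bl1, of "Dfr f" x t] Dd[OF U] unfolding diff_def
        by simp
    next
      case 3
      then show ?thesis using line_deriv[OF _ bl2, of "Dfr (Dfr f)" x t] Dd[OF U] unfolding diff_def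
        by simp
    qed
  qed
  obtain t where t: "0 < t" "t < 1"
    and eq: "(\<lambda>t. f (x + t *\<^sub>R h)) 1 = (\<Sum>m<3. diff m 0 / fact m * 1 ^ m) + diff 3 t / fact 3 * 1 ^ 3"
    using Maclaurin[of 1 3 diff "\<lambda>t. f (x + t *\<^sub>R h)"] der unfolding diff_def by auto
  have eq2: "f (x + h) - f x - Dfr f x h - Dfr (Dfr f) x h h / 2 = Dfr (Dfr (Dfr f)) (x + t *\<^sub>R h) h h h / 6"
    using eq by (simp add: diff_def eval_nat_numeral fact_numeral)
  have "\<bar>Dfr (Dfr (Dfr f)) (x + t *\<^sub>R h) h h h\<bar> \<le> K * norm h ^ 3"
  proof -
    let ?B = "Dfr (Dfr (Dfr f)) (x + t *\<^sub>R h)"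
    have "norm (?B h h h) \<le> norm (?B h h) * norm h" by (rule norm_blinfun)
    also have "\<dots> \<le> (norm (?B h) * norm h) * norm h" by (intro mult_right_mono norm_blinfun) auto
    also have "\<dots> \<le> ((norm ?B * norm h) * norm h) * norm h" by (intro mult_right_mono norm_blinfun) auto
    also have "\<dots> \<le> ((K * norm h) * norm h) * norm h"
      using bnd[of t] t by (intro mult_right_mono) auto
    finally show ?thesis by (simp add: power3_eq_cube mult_ac)
  qed
  then show ?thesis unfolding eq2 by simp
qed

lemma pd_uniform:
  fixes H :: "'a::euclidean_space \<Rightarrow>\<^sub>L 'a \<Rightarrow>\<^sub>L real"
  assumes "pos_def_form H"
  shows "\<exists>c>0. \<forall>v. H v v \<ge> c * norm v ^ 2"
proof -
  have cont: "continuous_on (sphere 0 1) (\<lambda>v. blinfun_apply (blinfun_apply H v) v)"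
    by (intro blinfun.continuous_on continuous_on_id continuous_on_const)
  obtain b :: 'a where b: "b \<in> Basis" using nonempty_Basis by blast
  have ne: "sphere (0::'a) 1 \<noteq> {}" using b by (auto simp: norm_Basis)
  obtain v0 where v0: "v0 \<in> sphere 0 1" "\<And>y. y \<in> sphere 0 1 \<Longrightarrow> H v0 v0 \<le> H y y"
    using continuous_attains_inf[OF compact_sphere ne cont] by blast
  have c: "H v0 v0 > 0" using assms v0(1) unfolding pos_def_form_def by (metis norm_zero zero_neq_one mem_sphere_0)
  have "H v v \<ge> H v0 v0 * norm v ^ 2" for v
  proof (cases "v = 0")
    case True then show ?thesis by (simp add: blinfun.zero_left blinfun.zero_right)
  next
    case False
    let ?u = "v /\<^sub>R norm v"
    have "?u \<in> sphere 0 1" using False by simp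
    then have "H v0 v0 \<le> H ?u ?u" by (rule v0(2))
    also have "H ?u ?u = H v v / (norm v)^2"
      by (simp add: blinfun.scaleR_left blinfun.scaleR_right power2_eq_square divide_inverse)
    finally show ?thesis using False by (simp add: pos_le_divide_eq)
  qed
  then show ?thesis using c by blast
qed



lemma nn_integral_scale:
  fixes f :: "'a::euclidean_space \<Rightarrow> ennreal" and t :: 'a
  assumes [measurable]: "f \<in> borel_measurable borel" and c: "c \<noteq> 0"
  shows "(\<integral>\<^sup>+x. f x \<partial>lborel) = ennreal (\<bar>c\<bar> ^ DIM('a)) * (\<integral>\<^sup>+u. f (t + c *\<^sub>R u) \<partial>lborel)"
  by (subst lborel_affine[OF c, of t])
     (simp add: nn_integral_density nn_integral_distr nn_integral_cmult)

lemma exp_ge_pow_fact: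
  fixes x :: real assumes "0 \<le> x" shows "x ^ n / fact n \<le> exp x"
proof -
  have "(\<Sum>m\<in>{n}. x ^ m /\<^sub>R fact m) \<le> (\<Sum>m. x ^ m /\<^sub>R fact m)"
    using assms by (intro sum_le_suminf summable_exp_generic) auto
  then show ?thesis by (simp add: exp_def divide_inverse mult.commute)
qed

lemma decay_integrable:
  "(\<integral>\<^sup>+u. ennreal (1 / (1 + norm u) ^ (DIM('a) + 2)) \<partial>(lborel::'a::euclidean_space measure)) < \<infinity>"
proof -
  define D where "D = DIM('a)"
  define V where "V = unit_ball_vol (real D)"
  define a where "a = (\<lambda>j::nat. 1 / (1 + real j) ^ (D + 2))"
  have pt: "ennreal (1 / (1 + norm u) ^ (D + 2)) \<le> (\<Sum>j. ennreal (a j) * indicator (ball (0::'a) (real j + 1)) u)" for u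
  proof -
    define j where "j = nat \<lfloor>norm u\<rfloor>"
    have f0: "0 \<le> \<lfloor>norm u\<rfloor>" by simp
    have jr: "real j = real_of_int \<lfloor>norm u\<rfloor>" unfolding j_def using f0 by simp
    have j1: "real j \<le> norm u" unfolding jr by linarith
    have j2: "norm u < real j + 1" unfolding jr by linarith
    have "1 / (1 + norm u) ^ (D + 2) \<le> a j"
      unfolding a_def using j1 by (intro divide_left_mono power_mono mult_pos_pos) auto
    then have "ennreal (1 / (1 + norm u) ^ (D + 2)) \<le> ennreal (a j) * indicator (ball (0::'a) (real j + 1)) u"
      using j2 by (simp add: ennreal_leI)
    also have "\<dots> = (\<Sum>i\<in>{j}. ennreal (a i) * indicator (ball (0::'a) (real i + 1)) u)" by (simp only: sum.insert finite.emptyI empty_iff sum.empty add_0_right not_False_eq_True)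
    also have "\<dots> \<le> (\<Sum>i. ennreal (a i) * indicator (ball (0::'a) (real i + 1)) u)"
      by (intro sum_le_suminf summableI) auto
    finally show ?thesis .
  qed
  have "(\<integral>\<^sup>+u. ennreal (1 / (1 + norm u) ^ (D + 2)) \<partial>(lborel::'a measure))
        \<le> (\<integral>\<^sup>+u. (\<Sum>j. ennreal (a j) * indicator (ball (0::'a) (real j + 1)) u) \<partial>lborel)"
    by (intro nn_integral_mono pt)
  also have "\<dots> = (\<Sum>j. \<integral>\<^sup>+u. ennreal (a j) * indicator (ball (0::'a) (real j + 1)) u \<partial>lborel)"
    by (intro nn_integral_suminf borel_measurable_indicator' borel_measurable_times_ennreal) (auto intro!: borel_measurable_indicator)
  also have "\<dots> = (\<Sum>j. ennreal (a j) * emeasure lborel (ball (0::'a) (real j + 1)))"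
    by (simp add: nn_integral_cmult_indicator)
  also have "\<dots> = (\<Sum>j. ennreal (V / (1 + real j) ^ 2))"
  proof (intro suminf_cong)
    fix j
    have "ennreal (a j) * emeasure lborel (ball (0::'a) (real j + 1)) = ennreal (a j * (V * (real j + 1) ^ D))"
    proof -
      have m: "emeasure lborel (ball (0::'a) (real j + 1)) = ennreal (V * (real j + 1) ^ D)"
        unfolding V_def D_def by (rule emeasure_ball) simp
      have "0 \<le> a j" "0 \<le> V * (real j + 1) ^ D" unfolding a_def V_def by auto
      then show ?thesis unfolding m by (simp add: ennreal_mult)
    qed
    also have "a j * (V * (real j + 1) ^ D) = V / (1 + real j) ^ 2"
    proof -
      define x where "x = 1 + real j"
      have x: "x > 0" "x ^ D > 0" unfolding x_def by auto
      have "a j * (V * (real j + 1) ^ D) = V * x ^ D / (x ^ D * x ^ 2)"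
        unfolding a_def x_def by (simp add: power_add add.commute power2_eq_square)
      also have "\<dots> = V / x ^ 2" using x by simp
      finally show ?thesis unfolding x_def .
    qed
    finally show "ennreal (a j) * emeasure lborel (ball (0::'a) (real j + 1)) = ennreal (V / (1 + real j) ^ 2)" .
  qed
  also have "\<dots> = ennreal (\<Sum>j. V / (1 + real j) ^ 2)"
  proof (intro suminf_ennreal2)
    show "0 \<le> V / (1 + real j) ^ 2" for j unfolding V_def by simp
    have "summable (\<lambda>n. inverse (real n ^ 2))" by (rule inverse_power_summable) auto
    then have "summable (\<lambda>n. inverse (real (Suc n) ^ 2))" by (subst summable_Suc_iff)
    then have "summable (\<lambda>n. V * inverse (real (Suc n) ^ 2))" by (rule summable_mult)
    then show "summable (\<lambda>j. V / (1 + real j) ^ 2)" by (simp add: divide_inverse add.commute)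
  qed
  finally show ?thesis unfolding D_def by (simp add: order_le_less_trans)
qed

lemma poly_exp_bound:
  fixes t c :: real and k D :: nat
  assumes t: "0 \<le> t" and c: "0 < c"
  defines "M \<equiv> k + D + 2"
  shows "t ^ k * exp (- c * t ^ 2) \<le> (2 ^ M * (2 + fact M / c ^ M)) * (1 / (1 + t) ^ (D + 2))"
proof -
  have e1: "1 \<le> exp (c * t ^ 2)" using c t by simp
  have e2: "(t ^ 2) ^ M \<le> fact M / c ^ M * exp (c * t ^ 2)"
  proof -
    have "(c * t ^ 2) ^ M / fact M \<le> exp (c * t ^ 2)" using c t by (intro exp_ge_pow_fact) auto
    then show ?thesis using c by (simp add: power_mult_distrib field_simps)
  qed
  have tM: "t ^ M \<le> 1 + (t ^ 2) ^ M"
  proof (cases "t \<le> 1")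
    case True then have "t ^ M \<le> 1" using t by (simp add: power_le_one)
    moreover have "0 \<le> (t ^ 2) ^ M" by simp
    ultimately show ?thesis by linarith
  next
    case False
    then have "t ^ M \<le> (t ^ 2) ^ M" using t by (intro power_mono) (auto simp: power2_eq_square)
    then show ?thesis by simp
  qed
  have "(1 + t) ^ M \<le> (2 * max 1 t) ^ M" using t by (intro power_mono) auto
  also have "\<dots> = 2 ^ M * max 1 t ^ M" by (simp add: power_mult_distrib)
  also have "max 1 t ^ M \<le> 1 + t ^ M" using t by (cases "t \<le> 1") (auto simp: max_def)
  then have "2 ^ M * max 1 t ^ M \<le> 2 ^ M * (1 + t ^ M)" by simp
  also have "\<dots> \<le> 2 ^ M * (2 + fact M / c ^ M) * exp (c * t ^ 2)"
  proof -
    have "1 + t ^ M \<le> 2 + fact M / c ^ M * exp (c * t ^ 2)" using tM e2 by linarith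
    also have "\<dots> \<le> (2 + fact M / c ^ M) * exp (c * t ^ 2)" using e1 by (simp add: algebra_simps)
    finally show ?thesis by (simp add: mult.assoc)
  qed
  finally have A: "(1 + t) ^ M \<le> 2 ^ M * (2 + fact M / c ^ M) * exp (c * t ^ 2)" .
  have "t ^ k * (1 + t) ^ (D + 2) \<le> (1 + t) ^ k * (1 + t) ^ (D + 2)"
    using t by (intro mult_right_mono power_mono) auto
  also have "\<dots> = (1 + t) ^ M" unfolding M_def by (simp add: power_add)
  finally have B: "t ^ k * (1 + t) ^ (D + 2) \<le> 2 ^ M * (2 + fact M / c ^ M) * exp (c * t ^ 2)" using A by linarith
  have pos: "0 < (1 + t) ^ (D + 2)" using t by simp
  have "t ^ k * exp (- c * t ^ 2) = t ^ k * (1 + t) ^ (D + 2) / exp (c * t ^ 2) / (1 + t) ^ (D + 2)"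
  proof -
    define P where "P = (1 + t) ^ (D + 2)"
    define E where "E = exp (c * t ^ 2)"
    have "exp (- c * t ^ 2) = 1 / E" unfolding E_def by (simp add: exp_minus divide_inverse)
    moreover have "P > 0" "E > 0" unfolding P_def E_def using pos by auto
    ultimately have "t ^ k * exp (- c * t ^ 2) = t ^ k * P / E / P" by simp
    then show ?thesis unfolding P_def E_def .
  qed
  also have "\<dots> \<le> 2 ^ M * (2 + fact M / c ^ M) / (1 + t) ^ (D + 2)"
    using B pos by (intro divide_right_mono) (auto simp: divide_le_eq)
  finally show ?thesis by simp
qed

lemma gauss_poly_integrable:
  fixes c :: real assumes c: "0 < c"
  shows "(\<integral>\<^sup>+u. ennreal (norm u ^ k * exp (- c * norm u ^ 2)) \<partial>(lborel::'a::euclidean_space measure)) < \<infinity>"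
proof -
  define M where "M = k + DIM('a) + 2"
  define C where "C = 2 ^ M * (2 + fact M / c ^ M)"
  have "(\<integral>\<^sup>+u. ennreal (norm u ^ k * exp (- c * norm u ^ 2)) \<partial>(lborel::'a measure))
     \<le> (\<integral>\<^sup>+u. ennreal C * ennreal (1 / (1 + norm (u::'a)) ^ (DIM('a) + 2)) \<partial>lborel)"
  proof (intro nn_integral_mono)
    fix u :: 'a
    have "norm u ^ k * exp (- c * norm u ^ 2) \<le> C * (1 / (1 + norm u) ^ (DIM('a) + 2))"
      unfolding C_def M_def by (rule poly_exp_bound[OF norm_ge_zero c])
    moreover have "0 \<le> C" unfolding C_def using c by simp
    ultimately show "ennreal (norm u ^ k * exp (- c * norm u ^ 2)) \<le> ennreal C * ennreal (1 / (1 + norm u) ^ (DIM('a) + 2))"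
      by (simp add: ennreal_mult[symmetric] ennreal_leI)
  qed
  also have "\<dots> = ennreal C * (\<integral>\<^sup>+u. ennreal (1 / (1 + norm (u::'a)) ^ (DIM('a) + 2)) \<partial>lborel)"
    by (rule nn_integral_cmult) auto
  also have "\<dots> < \<infinity>" using decay_integrable[where 'a='a] by (simp add: ennreal_mult_less_top)
  finally show ?thesis .
qed



lemma abs_exp_sub1: "\<bar>exp a - 1\<bar> \<le> \<bar>a\<bar> * exp \<bar>a\<bar>" for a :: real
proof (cases "a \<ge> 0")
  case True
  have "1 - a \<le> exp (- a)" using exp_ge_add_one_self[of "-a"] by simp
  then have "(1 - a) * exp a \<le> 1" by (simp add: exp_minus field_simps)
  then show ?thesis using True by (simp add: algebra_simps)
next
  case False
  have "1 + a \<le> exp a" using exp_ge_add_one_self[of a] by simp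
  moreover have "exp a \<le> 1" using False by simp
  moreover have "1 \<le> exp (- a)" using False by simp
  ultimately have "\<bar>exp a - 1\<bar> \<le> \<bar>a\<bar>" using False by linarith
  also have "\<dots> \<le> \<bar>a\<bar> * exp \<bar>a\<bar>" by (simp add: mult_le_cancel_left1)
  finally show ?thesis .
qed

lemma root_dev_le:
  fixes r :: real and p :: nat assumes r: "0 \<le> r" and p: "p \<ge> 1"
  shows "\<bar>r powr (1 / real p) - 1\<bar> ^ p \<le> r + 1"
proof (cases "r \<le> 1")
  case True
  have "r powr (1 / real p) \<le> 1" using True r p by (simp add: powr_le1)
  moreover have "0 \<le> r powr (1 / real p)" by simp
  ultimately have "\<bar>r powr (1 / real p) - 1\<bar> \<le> 1" by linarith
  then have "\<bar>r powr (1 / real p) - 1\<bar> ^ p \<le> 1" by (simp add: power_le_one)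
  then show ?thesis using r by linarith
next
  case False
  have ge: "1 \<le> r powr (1 / real p)" using False p by (simp add: ge_one_powr_ge_zero)
  have "\<bar>r powr (1 / real p) - 1\<bar> ^ p \<le> (r powr (1 / real p)) ^ p"
    using ge by (intro power_mono) auto
  also have "\<dots> = r"
  proof -
    have rp: "0 < r powr (1 / real p)" using False by simp
    have "(r powr (1 / real p)) ^ p = (r powr (1 / real p)) powr (real p)"
      by (rule powr_realpow[OF rp, symmetric])
    also have "\<dots> = r powr (1 / real p * real p)" by (rule powr_powr)
    also have "1 / real p * real p = 1" using p by simp
    finally show ?thesis using False by simp
  qed
  finally show ?thesis by linarith
qed

lemma exp_dev_le:
  fixes R :: real and p :: nat assumes p: "p \<ge> 1"
  shows "\<bar>exp (- R) powr (1 / real p) - 1\<bar> ^ p \<le> \<bar>R\<bar> ^ p * exp \<bar>R\<bar>"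
proof -
  have e: "exp (- R) powr (1 / real p) = exp (- R / real p)" by (simp add: powr_def)
  have "\<bar>exp (- R / real p) - 1\<bar> \<le> \<bar>- R / real p\<bar> * exp \<bar>- R / real p\<bar>" by (rule abs_exp_sub1)
  also have "\<dots> \<le> \<bar>R\<bar> * exp (\<bar>R\<bar> / real p)"
  proof -
    have pp: "real p \<ge> 1" using p by simp
    have "\<bar>R\<bar> * 1 \<le> \<bar>R\<bar> * real p" using pp by (intro mult_left_mono) auto
    then have a1: "\<bar>- R / real p\<bar> \<le> \<bar>R\<bar>" using pp by (simp add: abs_divide divide_le_eq)
    have a2: "exp \<bar>- R / real p\<bar> = exp (\<bar>R\<bar> / real p)" by (simp add: abs_divide)
    show ?thesis unfolding a2 using a1 by (intro mult_right_mono) auto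
  qed
  finally have "\<bar>exp (- R / real p) - 1\<bar> ^ p \<le> (\<bar>R\<bar> * exp (\<bar>R\<bar> / real p)) ^ p"
    by (intro power_mono) auto
  also have "\<dots> = \<bar>R\<bar> ^ p * exp \<bar>R\<bar>"
    using p by (simp add: power_mult_distrib exp_of_nat_mult[symmetric])
  finally show ?thesis unfolding e .
qed

lemma gauss_pos:
  fixes a :: real
  assumes that: "a > 0"
  shows "0 < enn2real (\<integral>\<^sup>+u. ennreal (norm u ^ 0 * exp (- a * norm u ^ 2)) \<partial>(lborel::'a::euclidean_space measure))"
proof -
  let ?I = "(\<integral>\<^sup>+u. ennreal (norm u ^ 0 * exp (- a * norm u ^ 2)) \<partial>(lborel::'a measure))"
  have fin: "?I < \<infinity>" using gauss_poly_integrable[OF that, of 0] by simp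
  have "?I \<noteq> 0"
  proof
    assume "?I = 0"
    then have "AE u in (lborel::'a measure). ennreal (norm u ^ 0 * exp (- a * norm u ^ 2)) = 0"
      by (subst (asm) nn_integral_0_iff_AE) auto
    then have "AE u in (lborel::'a measure). False" by simp
    then have "ae_filter (lborel::'a measure) = bot" using trivial_limit_def by blast
    then show False by (simp add: ae_filter_eq_bot_iff)
  qed
  then show ?thesis using fin by (simp add: enn2real_positive_iff less_top[symmetric] zero_less_iff_neq_zero)
qed

lemma gauss_scaled:
  fixes x0 :: "'a::euclidean_space" and a :: real and n :: nat
  assumes a: "a > 0" and n: "n \<ge> 1"
  shows "(\<integral>\<^sup>+x. ennreal (norm (x - x0) ^ k * exp (- (real n * a) * norm (x - x0) ^ 2)) \<partial>lborel)
    = ennreal ((1 / sqrt (real n)) ^ DIM('a) * (1 / sqrt (real n)) ^ k *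
        enn2real (\<integral>\<^sup>+u. ennreal (norm u ^ k * exp (- a * norm u ^ 2)) \<partial>(lborel::'a measure)))"
proof -
  define s where "s = 1 / sqrt (real n)"
  have s: "s > 0" "real n * s ^ 2 = 1" using n unfolding s_def by (auto simp: power_divide)
  let ?G = "\<lambda>u::'a. ennreal (norm u ^ k * exp (- a * norm u ^ 2))"
  have fin: "integral\<^sup>N lborel ?G < \<infinity>" by (rule gauss_poly_integrable[OF a])
  have "(\<integral>\<^sup>+x. ennreal (norm (x - x0) ^ k * exp (- (real n * a) * norm (x - x0) ^ 2)) \<partial>lborel)
      = ennreal (\<bar>s\<bar> ^ DIM('a)) * (\<integral>\<^sup>+u. ennreal (norm (x0 + s *\<^sub>R u - x0) ^ k * exp (- (real n * a) * norm (x0 + s *\<^sub>R u - x0) ^ 2)) \<partial>lborel)"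
    using s by (intro nn_integral_scale) auto
  also have "(\<lambda>u. ennreal (norm (x0 + s *\<^sub>R u - x0) ^ k * exp (- (real n * a) * norm (x0 + s *\<^sub>R u - x0) ^ 2)))
     = (\<lambda>u. ennreal (s ^ k) * ?G u)"
  proof (rule ext)
    fix u :: 'a
    have "norm (x0 + s *\<^sub>R u - x0) = s * norm u" using s by simp
    moreover have "real n * a * (s * norm u) ^ 2 = a * norm u ^ 2"
      using s(2) by (simp add: power_mult_distrib algebra_simps)
    ultimately show "ennreal (norm (x0 + s *\<^sub>R u - x0) ^ k * exp (- (real n * a) * norm (x0 + s *\<^sub>R u - x0) ^ 2))
       = ennreal (s ^ k) * ?G u"
      using s by (simp add: ennreal_mult[symmetric] power_mult_distrib mult.assoc)
  qed
  also have "(\<integral>\<^sup>+u. ennreal (s ^ k) * ?G u \<partial>lborel) = ennreal (s ^ k) * integral\<^sup>N lborel ?G"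
    by (rule nn_integral_cmult) auto
  also have "integral\<^sup>N lborel ?G = ennreal (enn2real (integral\<^sup>N lborel ?G))"
    using fin by (simp add: ennreal_enn2real less_top)
  finally show ?thesis using s unfolding s_def[symmetric]
    by (simp add: ennreal_mult[symmetric] mult.assoc)
qed

lemma exp_poly_decay:
  fixes a :: real and n :: nat and D p :: nat
  assumes a: "a > 0" and n: "n \<ge> 1"
  shows "exp (- a * real n) * real n ^ D \<le> fact (D + p) / a ^ (D + p) * real n powr (- real p / 2)"
proof -
  define m where "m = D + p"
  have nn: "real n \<ge> 1" using n by simp
  have "(a * real n) ^ m / fact m \<le> exp (a * real n)" using a n by (intro exp_ge_pow_fact) auto
  then have e: "exp (- a * real n) \<le> fact m / (a * real n) ^ m"
    using a nn by (simp add: exp_minus field_simps)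
  have "exp (- a * real n) * real n ^ D \<le> fact m / (a * real n) ^ m * real n ^ D"
    using e by (intro mult_right_mono) auto
  also have "\<dots> = fact m / a ^ m / real n ^ p"
    using a nn unfolding m_def by (simp add: power_mult_distrib power_add field_simps)
  also have "\<dots> \<le> fact m / a ^ m * real n powr (- real p / 2)"
  proof -
    have "real n powr (- real p) \<le> real n powr (- real p / 2)"
      using nn by (intro powr_mono) auto
    moreover have "1 / real n ^ p = real n powr (- real p)"
      using nn by (simp add: powr_minus powr_realpow divide_inverse)
    ultimately have "1 / real n ^ p \<le> real n powr (- real p / 2)" by simp
    moreover have "0 \<le> fact m / a ^ m" using a by simp
    ultimately have "fact m / a ^ m * (1 / real n ^ p) \<le> fact m / a ^ m * real n powr (- real p / 2)"
      by (intro mult_left_mono)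
    then show ?thesis by simp
  qed
  finally show ?thesis unfolding m_def .
qed



lemma div_helper:
  fixes a S b m e m0 z C :: real
  assumes "S > 0" "C > 0"
  shows "(a * (S * b * m) + e * (S * m0) + z) / (S * C) = (a * b * m + e * m0 + z / S) / C"
  using assms by (simp add: field_simps)

lemma per_n:
  fixes S0 :: "'a::euclidean_space set" and I :: "'a \<Rightarrow> real" and x0 :: 'a
    and A :: "'a \<Rightarrow>\<^sub>L 'a \<Rightarrow>\<^sub>L real" and q :: "'a \<Rightarrow> real" and n p :: nat
  assumes n: "n \<ge> 1" and p: "p \<ge> 1"
    and S0: "open S0" and Icont: "continuous_on S0 I"
    and lam: "lam > 0" and Lam: "Lam > 0"
    and Alow: "\<And>v. lam * norm v ^ 2 \<le> A v v" and Aup: "\<And>v. A v v \<le> Lam * norm v ^ 2"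
    and rho: "rho > 0" and K: "K \<ge> 0" and Krho: "K * rho \<le> lam / 4"
    and ball: "\<And>h. norm h < rho \<Longrightarrow> x0 + h \<in> S0"
    and tay: "\<And>h. norm h < rho \<Longrightarrow> \<bar>I (x0 + h) - A h h / 2\<bar> \<le> K * norm h ^ 3"
    and tail: "\<And>y. y \<in> S0 \<Longrightarrow> norm (y - x0) \<ge> rho \<Longrightarrow> I y \<ge> \<delta>" and \<delta>: "\<delta> > 0"
    and eps: "0 < \<epsilon>" "\<epsilon> < 1"
    and qb: "\<And>y. y \<in> S0 \<Longrightarrow> exp (- real n * I y) \<le> q y"
    and qmeas: "(\<lambda>y. indicator S0 y * q y powr (1 - \<epsilon>)) \<in> borel_measurable borel"
    and qint: "(\<integral>\<^sup>+y. ennreal (indicator S0 y * q y powr (1 - \<epsilon>)) \<partial>lborel) = ennreal Qi"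
    and Qi_nn: "Qi \<ge> 0"
  defines "f \<equiv> \<lambda>x. if x \<in> S0 then exp (- real n * I x) else 0"
    and "pt \<equiv> \<lambda>x. exp (- (real n / 2) * A (x - x0) (x - x0))"
    and "Z \<equiv> \<integral>y. exp (- (real n / 2) * A (y - x0) (y - x0)) \<partial>lborel"
    and "s \<equiv> 1 / sqrt (real n)"
    and "M1 \<equiv> enn2real (\<integral>\<^sup>+u. ennreal (norm u ^ (3 * p) * exp (- (lam / 4) * norm u ^ 2)) \<partial>(lborel::'a measure))"
    and "M0 \<equiv> enn2real (\<integral>\<^sup>+u. ennreal (norm u ^ 0 * exp (- (lam / 4) * norm u ^ 2)) \<partial>(lborel::'a measure))"
    and "c0 \<equiv> enn2real (\<integral>\<^sup>+u. ennreal (norm u ^ 0 * exp (- (Lam / 2) * norm u ^ 2)) \<partial>(lborel::'a measure))"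
  shows "integrable (density lborel (\<lambda>x. ennreal (pt x / Z))) (\<lambda>x. \<bar>(f x / pt x) powr (1 / real p) - 1\<bar> ^ p)
     \<and> (\<integral>x. \<bar>(f x / pt x) powr (1 / real p) - 1\<bar> ^ p \<partial>density lborel (\<lambda>x. ennreal (pt x / Z))) \<le>
        (K ^ p * s ^ p * M1 + exp (- real n * (lam / 4) * rho ^ 2) * M0 + exp (- real n * \<epsilon> * \<delta>) * Qi / s ^ DIM('a)) / c0"
proof -
  define g where "g = (\<lambda>x. \<bar>(f x / pt x) powr (1 / real p) - 1\<bar> ^ p)"
  define D where "D = DIM('a)"
  have nn: "real n \<ge> 1" using n by simp
  have s: "s > 0" "real n * s ^ 2 = 1" using nn unfolding s_def by (auto simp: power_divide)
  have ptpos: "pt x > 0" for x unfolding pt_def by simp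
  have pt_up: "pt x \<le> exp (- (real n * (lam / 2)) * norm (x - x0) ^ 2)" for x
    unfolding pt_def using Alow[of "x - x0"] nn by (simp add: mult_left_mono)
  have pt_low: "exp (- (real n * (Lam / 2)) * norm (x - x0) ^ 2) \<le> pt x" for x
    unfolding pt_def using Aup[of "x - x0"] nn by (simp add: mult_left_mono)
  have contA: "continuous_on UNIV (\<lambda>x. blinfun_apply (blinfun_apply A (x - x0)) (x - x0))"
    by (intro blinfun.continuous_on continuous_intros)
  have pt_meas[measurable]: "pt \<in> borel_measurable borel"
    unfolding pt_def by (intro borel_measurable_continuous_onI continuous_intros contA)
  have f_eq: "f = (\<lambda>x. indicator S0 x *\<^sub>R exp (- real n * I x))"
    unfolding f_def by (auto simp: fun_eq_iff indicator_def)
  have f_meas[measurable]: "f \<in> borel_measurable borel"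
    unfolding f_eq using S0 Icont
    by (intro borel_measurable_continuous_on_indicator continuous_intros) auto
  have g_meas[measurable]: "g \<in> borel_measurable borel" unfolding g_def by measurable
  have f_nonneg: "f x \<ge> 0" for x unfolding f_def by auto
  have g_nonneg: "g x \<ge> 0" for x unfolding g_def by simp
  have q_nonneg: "indicator S0 y * q y powr (1 - \<epsilon>) \<ge> 0" for y by simp
  define e1 where "e1 = exp (- real n * (lam / 4) * rho ^ 2)"
  define e2 where "e2 = exp (- real n * \<epsilon> * \<delta>)"
  define T1 where "T1 = (\<lambda>x. (real n * K) ^ p * (norm (x - x0) ^ (3 * p) * exp (- (real n * (lam / 4)) * norm (x - x0) ^ 2)))"
  define T2 where "T2 = (\<lambda>x. e1 * (norm (x - x0) ^ 0 * exp (- (real n * (lam / 4)) * norm (x - x0) ^ 2)))"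
  define T3 where "T3 = (\<lambda>x. e2 * (indicator S0 x * q x powr (1 - \<epsilon>)))"
  have T1_nn: "T1 x \<ge> 0" for x unfolding T1_def using K by simp
  have T2_nn: "T2 x \<ge> 0" for x unfolding T2_def e1_def by simp
  have T3_nn: "T3 x \<ge> 0" for x unfolding T3_def e2_def by simp
  have ptw: "pt x * g x \<le> T1 x + T2 x + T3 x" for x
  proof (cases "norm (x - x0) < rho")
    case True
    define h where "h = x - x0"
    have xh: "x = x0 + h" unfolding h_def by simp
    have hr: "norm h < rho" using True unfolding h_def .
    have xS: "x \<in> S0" using ball[OF hr] xh by simp
    define R where "R = real n * (I x - A h h / 2)"
    have fx: "f x = exp (- real n * I x)" unfolding f_def using xS by simp
    have ratio: "f x / pt x = exp (- R)"
    proof -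
      have e: "- real n * I x - (- (real n / 2) * A h h) = - R" unfolding R_def by (simp add: algebra_simps)
      have "f x / pt x = exp (- real n * I x) / exp (- (real n / 2) * A h h)"
        unfolding fx pt_def h_def by simp
      also have "\<dots> = exp (- real n * I x - (- (real n / 2) * A h h))" by (rule exp_diff[symmetric])
      finally show ?thesis unfolding e .
    qed
    have Rb: "\<bar>R\<bar> \<le> real n * K * norm h ^ 3"
      unfolding R_def using tay[OF hr] xh nn by (simp add: abs_mult mult_left_mono)
    have Kh: "real n * K * norm h ^ 3 \<le> real n * (lam / 4) * norm h ^ 2"
    proof -
      have "K * norm h \<le> K * rho" using K hr by (intro mult_left_mono) auto
      then have "K * norm h \<le> lam / 4" using Krho by linarith
      then have "(K * norm h) * norm h ^ 2 \<le> (lam / 4) * norm h ^ 2" by (intro mult_right_mono) auto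
      then have "K * norm h ^ 3 \<le> (lam / 4) * norm h ^ 2" by (simp add: power3_eq_cube power2_eq_square mult_ac)
      then show ?thesis using nn by (simp add: mult.assoc mult_left_mono)
    qed
    have "g x \<le> \<bar>R\<bar> ^ p * exp \<bar>R\<bar>" unfolding g_def ratio by (rule exp_dev_le[OF p])
    also have "\<dots> \<le> (real n * K * norm h ^ 3) ^ p * exp (real n * K * norm h ^ 3)"
    proof (rule mult_mono)
      show "\<bar>R\<bar> ^ p \<le> (real n * K * norm h ^ 3) ^ p" by (rule power_mono[OF Rb abs_ge_zero])
      show "exp \<bar>R\<bar> \<le> exp (real n * K * norm h ^ 3)" using Rb by simp
      have "0 \<le> \<bar>R\<bar>" by simp
      then show "0 \<le> (real n * K * norm h ^ 3) ^ p" using Rb by (metis order_trans zero_le_power)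
      show "0 \<le> exp \<bar>R\<bar>" by simp
    qed
    finally have gb: "g x \<le> (real n * K * norm h ^ 3) ^ p * exp (real n * K * norm h ^ 3)" .
    have "pt x * g x \<le> exp (- (real n * (lam / 2)) * norm h ^ 2) * ((real n * K * norm h ^ 3) ^ p * exp (real n * K * norm h ^ 3))"
    proof (rule mult_mono)
      show "pt x \<le> exp (- (real n * (lam / 2)) * norm h ^ 2)" unfolding h_def by (rule pt_up)
      show "g x \<le> (real n * K * norm h ^ 3) ^ p * exp (real n * K * norm h ^ 3)" by (rule gb)
      show "0 \<le> exp (- (real n * (lam / 2)) * norm h ^ 2)" by simp
      show "0 \<le> g x" by (rule g_nonneg)
    qed
    also have "\<dots> = (real n * K * norm h ^ 3) ^ p * (exp (real n * K * norm h ^ 3) * exp (- (real n * (lam / 2)) * norm h ^ 2))"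
      by (simp only: mult_ac)
    also have "exp (real n * K * norm h ^ 3) * exp (- (real n * (lam / 2)) * norm h ^ 2) = exp (real n * K * norm h ^ 3 + - (real n * (lam / 2)) * norm h ^ 2)"
      by (rule exp_add[symmetric])
    also have "(real n * K * norm h ^ 3) ^ p * exp (real n * K * norm h ^ 3 + - (real n * (lam / 2)) * norm h ^ 2)
       \<le> (real n * K * norm h ^ 3) ^ p * exp (- (real n * (lam / 4)) * norm h ^ 2)"
    proof (rule mult_left_mono)
      define X where "X = real n * K * norm h ^ 3"
      define Y where "Y = real n * (lam / 4) * norm h ^ 2"
      have e1: "- (real n * (lam / 2)) * norm h ^ 2 = - 2 * Y" "- (real n * (lam / 4)) * norm h ^ 2 = - Y"
        unfolding Y_def by simp_all
      have "X \<le> Y" using Kh unfolding X_def Y_def .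
      then have "X + - 2 * Y \<le> - Y" by linarith
      then show "exp (real n * K * norm h ^ 3 + - (real n * (lam / 2)) * norm h ^ 2) \<le> exp (- (real n * (lam / 4)) * norm h ^ 2)"
        unfolding e1 X_def by simp
      have "0 \<le> real n * K * norm h ^ 3" using K by simp
      then show "0 \<le> (real n * K * norm h ^ 3) ^ p" by simp
    qed
    also have "\<dots> = T1 x"
      unfolding T1_def h_def by (simp add: power_mult_distrib power_mult mult.assoc)
    finally show ?thesis using T2_nn[of x] T3_nn[of x] by linarith
  next
    case False
    then have hr: "norm (x - x0) \<ge> rho" by simp
    have "g x \<le> f x / pt x + 1" unfolding g_def
      using f_nonneg[of x] ptpos[of x] p by (intro root_dev_le) auto
    then have "pt x * g x \<le> pt x * (f x / pt x + 1)" using ptpos[of x] by (intro mult_left_mono) auto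
    also have "\<dots> = f x + pt x" using ptpos[of x] by (simp add: field_simps)
    finally have a: "pt x * g x \<le> f x + pt x" .
    have fb: "f x \<le> T3 x"
    proof (cases "x \<in> S0")
      case True
      have Ix: "I x \<ge> \<delta>" using tail[OF True hr] .
      have "f x = exp (- real n * \<epsilon> * I x) * exp (- real n * I x) powr (1 - \<epsilon>)"
      proof -
        have e: "exp (- real n * I x) powr (1 - \<epsilon>) = exp ((1 - \<epsilon>) * (- real n * I x))" by (simp add: powr_def)
        have e': "- real n * \<epsilon> * I x + (1 - \<epsilon>) * (- real n * I x) = - real n * I x" by (simp add: algebra_simps)
        have "f x = exp (- real n * \<epsilon> * I x + (1 - \<epsilon>) * (- real n * I x))" unfolding e' f_def using True by simp
        also have "\<dots> = exp (- real n * \<epsilon> * I x) * exp ((1 - \<epsilon>) * (- real n * I x))" by (rule exp_add)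
        finally show ?thesis unfolding e .
      qed
      also have "\<dots> \<le> e2 * q x powr (1 - \<epsilon>)"
      proof (intro mult_mono)
        show "exp (- real n * \<epsilon> * I x) \<le> e2" unfolding e2_def
          using Ix eps nn by (simp add: mult_left_mono)
        show "exp (- real n * I x) powr (1 - \<epsilon>) \<le> q x powr (1 - \<epsilon>)"
          using qb[OF True] eps by (intro powr_mono2) auto
      qed (auto simp: e2_def)
      also have "\<dots> = T3 x" unfolding T3_def using True by simp
      finally show ?thesis .
    next
      case False
      then show ?thesis unfolding f_def using T3_nn[of x] by simp
    qed
    have pb: "pt x \<le> T2 x"
    proof -
      have "pt x \<le> exp (- (real n * (lam / 2)) * norm (x - x0) ^ 2)" by (rule pt_up)
      also have "\<dots> = exp (- (real n * (lam / 4)) * norm (x - x0) ^ 2) * exp (- (real n * (lam / 4)) * norm (x - x0) ^ 2)"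
      proof -
        have "- (real n * (lam / 2)) * norm (x - x0) ^ 2 = - (real n * (lam / 4)) * norm (x - x0) ^ 2 + - (real n * (lam / 4)) * norm (x - x0) ^ 2"
          by simp
        then show ?thesis by (simp only: exp_add)
      qed
      also have "\<dots> \<le> e1 * exp (- (real n * (lam / 4)) * norm (x - x0) ^ 2)"
      proof (intro mult_right_mono)
        have "rho ^ 2 \<le> norm (x - x0) ^ 2" using hr rho by (intro power_mono) auto
        then show "exp (- (real n * (lam / 4)) * norm (x - x0) ^ 2) \<le> e1"
          unfolding e1_def using lam nn by (simp add: mult_left_mono)
      qed auto
      also have "\<dots> = T2 x" unfolding T2_def by simp
      finally show ?thesis .
    qed
    show ?thesis using a fb pb T1_nn[of x] by linarith
  qed
  have [measurable]: "T1 \<in> borel_measurable borel" "T2 \<in> borel_measurable borel" "T3 \<in> borel_measurable borel"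
    unfolding T1_def T2_def T3_def using qmeas by measurable
  have M1nn: "0 \<le> M1" and M0nn: "0 \<le> M0" unfolding M1_def M0_def by (simp_all add: enn2real_nonneg)
  have iT1: "(\<integral>\<^sup>+x. ennreal (T1 x) \<partial>lborel) = ennreal ((real n * K) ^ p * (s ^ D * s ^ (3 * p) * M1))"
  proof -
    have "(\<integral>\<^sup>+x. ennreal (T1 x) \<partial>lborel) = ennreal ((real n * K) ^ p) *
        (\<integral>\<^sup>+x. ennreal (norm (x - x0) ^ (3 * p) * exp (- (real n * (lam / 4)) * norm (x - x0) ^ 2)) \<partial>lborel)"
      unfolding T1_def using K by (subst nn_integral_cmult[symmetric]) (auto simp: ennreal_mult)
    also have "\<dots> = ennreal ((real n * K) ^ p) * ennreal (s ^ D * s ^ (3 * p) * M1)"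
      using gauss_scaled[where 'a='a and a="lam / 4" and k="3 * p" and n=n] lam n unfolding s_def D_def M1_def by simp
    finally show ?thesis using K s M1nn by (simp add: ennreal_mult)
  qed
  have iT2: "(\<integral>\<^sup>+x. ennreal (T2 x) \<partial>lborel) = ennreal (e1 * (s ^ D * M0))"
  proof -
    have "(\<integral>\<^sup>+x. ennreal (T2 x) \<partial>lborel) = ennreal e1 *
        (\<integral>\<^sup>+x. ennreal (norm (x - x0) ^ 0 * exp (- (real n * (lam / 4)) * norm (x - x0) ^ 2)) \<partial>lborel)"
      unfolding T2_def e1_def by (subst nn_integral_cmult[symmetric]) (auto simp: ennreal_mult simp del: power_0)
    also have "\<dots> = ennreal e1 * ennreal (s ^ D * M0)"
      using gauss_scaled[where 'a='a and a="lam / 4" and k=0 and n=n] lam n unfolding s_def D_def M0_def by simp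
    finally show ?thesis unfolding e1_def using s M0nn by (simp add: ennreal_mult)
  qed
  have iT3: "(\<integral>\<^sup>+x. ennreal (T3 x) \<partial>lborel) = ennreal (e2 * Qi)"
  proof -
    have "(\<integral>\<^sup>+x. ennreal (T3 x) \<partial>lborel) = ennreal e2 * (\<integral>\<^sup>+y. ennreal (indicator S0 y * q y powr (1 - \<epsilon>)) \<partial>lborel)"
    proof -
      have "(\<integral>\<^sup>+x. ennreal (T3 x) \<partial>lborel) = (\<integral>\<^sup>+x. ennreal e2 * ennreal (indicator S0 x * q x powr (1 - \<epsilon>)) \<partial>lborel)"
        unfolding T3_def e2_def by (intro nn_integral_cong) (simp add: ennreal_mult)
      also have "\<dots> = ennreal e2 * (\<integral>\<^sup>+y. ennreal (indicator S0 y * q y powr (1 - \<epsilon>)) \<partial>lborel)"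
        using measurable_compose[OF qmeas measurable_ennreal] by (intro nn_integral_cmult) simp
      finally show ?thesis .
    qed
    also have "\<dots> = ennreal (e2 * Qi)" unfolding qint e2_def using Qi_nn
      by (simp add: ennreal_mult)
    finally show ?thesis .
  qed
  define B where "B = (real n * K) ^ p * (s ^ D * s ^ (3 * p) * M1) + e1 * (s ^ D * M0) + e2 * Qi"
  have iF: "(\<integral>\<^sup>+x. ennreal (T1 x + T2 x + T3 x) \<partial>lborel) = ennreal B"
  proof -
    have "(\<integral>\<^sup>+x. ennreal (T1 x + T2 x + T3 x) \<partial>lborel) = (\<integral>\<^sup>+x. ennreal (T1 x) + ennreal (T2 x) + ennreal (T3 x) \<partial>lborel)"
      using T1_nn T2_nn T3_nn by (intro nn_integral_cong) (simp add: ennreal_plus)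
    also have "\<dots> = (\<integral>\<^sup>+x. ennreal (T1 x) \<partial>lborel) + (\<integral>\<^sup>+x. ennreal (T2 x) \<partial>lborel) + (\<integral>\<^sup>+x. ennreal (T3 x) \<partial>lborel)"
      by (simp add: nn_integral_add)
    also have "\<dots> = ennreal B"
    proof -
      have "0 \<le> M1" "0 \<le> M0" unfolding M1_def M0_def by (simp_all add: enn2real_nonneg)
      then have "0 \<le> (real n * K) ^ p * (s ^ D * s ^ (3 * p) * M1)" "0 \<le> e1 * (s ^ D * M0)" "0 \<le> e2 * Qi"
        using K s Qi_nn unfolding e1_def e2_def by simp_all
      then show ?thesis unfolding iT1 iT2 iT3 B_def by (simp add: ennreal_plus)
    qed
    finally show ?thesis .
  qed
  have B_nn: "B \<ge> 0" unfolding B_def e1_def e2_def M1_def M0_def using K s Qi_nn by (simp add: enn2real_nonneg)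
  have Zeq: "Z = enn2real (\<integral>\<^sup>+x. ennreal (pt x) \<partial>lborel)"
    unfolding Z_def pt_def[symmetric] using ptpos by (intro integral_eq_nn_integral) (auto intro: less_imp_le)
  have c0pos: "c0 > 0" unfolding c0_def using Lam by (intro gauss_pos) simp
  have up: "(\<integral>\<^sup>+x. ennreal (pt x) \<partial>lborel) < \<infinity>"
  proof -
    have "(\<integral>\<^sup>+x. ennreal (pt x) \<partial>lborel) \<le> (\<integral>\<^sup>+x. ennreal (norm (x - x0) ^ 0 * exp (- (real n * (lam / 2)) * norm (x - x0) ^ 2)) \<partial>lborel)"
      using pt_up by (intro nn_integral_mono) (simp add: ennreal_leI)
    also have "\<dots> < \<infinity>" using gauss_scaled[where 'a='a and a="lam / 2" and k=0 and n=n] lam n by simp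
    finally show ?thesis .
  qed
  have low: "ennreal (s ^ D * c0) \<le> (\<integral>\<^sup>+x. ennreal (pt x) \<partial>lborel)"
  proof -
    have "ennreal (s ^ D * c0) = (\<integral>\<^sup>+x. ennreal (norm (x - x0) ^ 0 * exp (- (real n * (Lam / 2)) * norm (x - x0) ^ 2)) \<partial>lborel)"
      using gauss_scaled[where 'a='a and a="Lam / 2" and k=0 and n=n] Lam n unfolding s_def D_def c0_def by simp
    also have "\<dots> \<le> (\<integral>\<^sup>+x. ennreal (pt x) \<partial>lborel)"
      using pt_low by (intro nn_integral_mono) (simp add: ennreal_leI)
    finally show ?thesis .
  qed
  have Zlow: "s ^ D * c0 \<le> Z"
  proof -
    have "s ^ D * c0 = enn2real (ennreal (s ^ D * c0))" using s c0pos by simp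
    also have "\<dots> \<le> enn2real (\<integral>\<^sup>+x. ennreal (pt x) \<partial>lborel)"
      using low up by (intro enn2real_mono) auto
    finally show ?thesis unfolding Zeq .
  qed
  have sDc0: "s ^ D * c0 > 0" using s c0pos by simp
  have Zpos: "Z > 0" using Zlow sDc0 by linarith
  have dens_meas[measurable]: "(\<lambda>x. pt x / Z) \<in> borel_measurable borel" by measurable
  have nnI: "(\<integral>\<^sup>+x. ennreal (pt x / Z * g x) \<partial>lborel) \<le> ennreal (B / Z)"
  proof -
    have "(\<integral>\<^sup>+x. ennreal (pt x / Z * g x) \<partial>lborel) \<le> (\<integral>\<^sup>+x. ennreal (1 / Z) * ennreal (T1 x + T2 x + T3 x) \<partial>lborel)"
    proof (intro nn_integral_mono)
      fix x
      have "pt x / Z * g x = (1 / Z) * (pt x * g x)" by simp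
      also have "\<dots> \<le> (1 / Z) * (T1 x + T2 x + T3 x)" using ptw[of x] Zpos by (intro mult_left_mono) auto
      finally have "pt x / Z * g x \<le> (1 / Z) * (T1 x + T2 x + T3 x)" .
      then show "ennreal (pt x / Z * g x) \<le> ennreal (1 / Z) * ennreal (T1 x + T2 x + T3 x)"
      proof -
        have "0 \<le> T1 x + T2 x + T3 x" using T1_nn[of x] T2_nn[of x] T3_nn[of x] by linarith
        then have "ennreal (1 / Z) * ennreal (T1 x + T2 x + T3 x) = ennreal ((1 / Z) * (T1 x + T2 x + T3 x))"
          using Zpos \<open>0 \<le> T1 x + T2 x + T3 x\<close> by (intro ennreal_mult[symmetric]) auto
        then show ?thesis using \<open>pt x / Z * g x \<le> (1 / Z) * (T1 x + T2 x + T3 x)\<close> by (simp add: ennreal_leI)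
      qed
    qed
    also have "\<dots> = ennreal (1 / Z) * ennreal B" by (subst nn_integral_cmult) (auto simp: iF)
    also have "\<dots> = ennreal (B / Z)" using Zpos B_nn by (simp add: ennreal_mult[symmetric])
    finally show ?thesis .
  qed
  have int1: "integrable lborel (\<lambda>x. pt x / Z * g x)"
  proof (rule integrableI_nonneg)
    have nnx: "0 \<le> pt x / Z * g x" for x
      using Zpos ptpos[of x] g_nonneg[of x] by (intro mult_nonneg_nonneg divide_nonneg_pos) auto
    show "AE x in lborel. 0 \<le> pt x / Z * g x" using nnx by simp
    show "(\<lambda>x. pt x / Z * g x) \<in> borel_measurable lborel" by simp
    show "(\<integral>\<^sup>+x. ennreal (pt x / Z * g x) \<partial>lborel) < \<infinity>"
      using nnI by (rule order_le_less_trans) simp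
  qed
  have dnn: "0 \<le> pt x / Z" for x using Zpos ptpos[of x] by simp
  have intd: "integrable (density lborel (\<lambda>x. ennreal (pt x / Z))) g"
    using int1 by (subst integrable_density) (auto simp: dnn)
  have "(\<integral>x. g x \<partial>density lborel (\<lambda>x. ennreal (pt x / Z))) = (\<integral>x. pt x / Z * g x \<partial>lborel)"
    by (subst integral_density) (auto simp: dnn)
  also have "\<dots> = enn2real (\<integral>\<^sup>+x. ennreal (pt x / Z * g x) \<partial>lborel)"
  proof (intro integral_eq_nn_integral)
    have "0 \<le> pt x * g x / Z" for x using Zpos ptpos[of x] g_nonneg[of x] by simp
    then show "AE x in lborel. 0 \<le> pt x / Z * g x" by simp
  qed simp
  also have "\<dots> \<le> B / Z" using enn2real_mono[OF nnI] B_nn Zpos by simp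
  also have "\<dots> \<le> B / (s ^ D * c0)" using Zlow sDc0 B_nn by (intro divide_left_mono) auto
  also have "\<dots> = (K ^ p * s ^ p * M1 + exp (- real n * (lam / 4) * rho ^ 2) * M0 + exp (- real n * \<epsilon> * \<delta>) * Qi / s ^ DIM('a)) / c0"
  proof -
    have pw: "(real n * K) ^ p * s ^ (3 * p) = K ^ p * s ^ p"
    proof -
      have "s ^ (3 * p) = (s ^ 2) ^ p * s ^ p" by (simp add: power_mult[symmetric] power_add[symmetric])
      then have "(real n * K) ^ p * s ^ (3 * p) = K ^ p * (real n * s ^ 2) ^ p * s ^ p"
        by (simp add: power_mult_distrib mult_ac)
      then show ?thesis using s(2) by simp
    qed
    have sD: "s ^ D > 0" using s by simp
    have "B / (s ^ D * c0) = ((real n * K) ^ p * s ^ (3 * p) * M1 + e1 * M0 + e2 * Qi / s ^ D) / c0"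
      unfolding B_def by (rule div_helper[OF sD c0pos])
    then show ?thesis unfolding pw e1_def e2_def D_def by simp
  qed
  finally show ?thesis using intd unfolding g_def by simp
qed



lemma qf_bound:
  fixes B :: "'a::real_normed_vector \<Rightarrow>\<^sub>L 'a \<Rightarrow>\<^sub>L real"
  shows "\<bar>B v v\<bar> \<le> norm B * norm v ^ 2"
proof -
  have "norm (B v v) \<le> norm (B v) * norm v" by (rule norm_blinfun)
  also have "\<dots> \<le> (norm B * norm v) * norm v" by (intro mult_right_mono norm_blinfun) auto
  finally show ?thesis by (simp add: power2_eq_square mult_ac)
qed

lemma s_pow:
  assumes n: "n \<ge> 1" shows "(1 / sqrt (real n)) ^ p = real n powr (- real p / 2)"
proof -
  have "1 / sqrt (real n) = real n powr (- (1/2))" using n by (simp add: powr_minus_divide powr_half_sqrt)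
  then have "(1 / sqrt (real n)) ^ p = real n powr (real p * (- (1/2)))" using n by (simp add: powr_power)
  then show ?thesis by simp
qed

lemma bnd_le:
  fixes n D p :: nat
  assumes n: "n \<ge> 1" and a1: "a1 > 0" and a2: "a2 > 0" and M0: "M0 \<ge> 0" and Qi: "Qi \<ge> 0"
    and c0: "c0 > 0" and K: "K \<ge> 0" and M1: "M1 \<ge> 0"
  shows "(K ^ p * (1 / sqrt (real n)) ^ p * M1 + exp (- real n * a1) * M0 + exp (- real n * a2) * Qi / (1 / sqrt (real n)) ^ D) / c0
    \<le> ((K ^ p * M1 + fact (D + p) / a1 ^ (D + p) * M0 + fact (D + p) / a2 ^ (D + p) * Qi) / c0) * real n powr (- real p / 2)"
proof -
  define P where "P = real n powr (- real p / 2)"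
  define F1 where "F1 = fact (D + p) / a1 ^ (D + p)"
  define F2 where "F2 = fact (D + p) / a2 ^ (D + p)"
  have nn: "real n \<ge> 1" using n by simp
  have t1: "K ^ p * (1 / sqrt (real n)) ^ p * M1 = K ^ p * M1 * P" unfolding P_def s_pow[OF n] by simp
  have t2: "exp (- real n * a1) * M0 \<le> F1 * M0 * P"
  proof -
    have nD: "1 \<le> real n ^ D" using nn by simp
    have "exp (- real n * a1) = exp (- a1 * real n) * 1" by (simp add: mult.commute)
    also have "\<dots> \<le> exp (- a1 * real n) * real n ^ D" using nD by (intro mult_left_mono) auto
    also have "\<dots> \<le> F1 * P" unfolding P_def F1_def by (rule exp_poly_decay[OF a1 n])
    finally have "exp (- real n * a1) * M0 \<le> F1 * P * M0" using M0 by (rule mult_right_mono)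
    then show ?thesis by (simp only: mult_ac)
  qed
  have t3: "exp (- real n * a2) * Qi / (1 / sqrt (real n)) ^ D \<le> F2 * Qi * P"
  proof -
    have s1: "1 \<le> sqrt (real n)" using nn by simp
    have "sqrt (real n) * 1 \<le> sqrt (real n) * sqrt (real n)" using s1 by (intro mult_left_mono) auto
    then have sq: "sqrt (real n) \<le> real n" using nn by simp
    have "exp (- real n * a2) * Qi / (1 / sqrt (real n)) ^ D = exp (- a2 * real n) * sqrt (real n) ^ D * Qi"
      by (simp add: power_divide mult.commute)
    also have "\<dots> \<le> exp (- a2 * real n) * real n ^ D * Qi"
      using sq Qi s1 by (intro mult_right_mono mult_left_mono power_mono) auto
    also have "exp (- a2 * real n) * real n ^ D \<le> F2 * P"
      unfolding P_def F2_def by (rule exp_poly_decay[OF a2 n])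
    then have "exp (- a2 * real n) * real n ^ D * Qi \<le> F2 * P * Qi"
      using Qi by (rule mult_right_mono)
    finally show ?thesis by (simp only: mult_ac)
  qed
  have e: "(K ^ p * M1 + F1 * M0 + F2 * Qi) * P = K ^ p * M1 * P + F1 * M0 * P + F2 * Qi * P"
    by (simp only: distrib_right)
  have "K ^ p * (1 / sqrt (real n)) ^ p * M1 + exp (- real n * a1) * M0 + exp (- real n * a2) * Qi / (1 / sqrt (real n)) ^ D
     \<le> (K ^ p * M1 + F1 * M0 + F2 * Qi) * P"
    unfolding e t1 using t2 t3 by linarith
  then have "(K ^ p * (1 / sqrt (real n)) ^ p * M1 + exp (- real n * a1) * M0 + exp (- real n * a2) * Qi / (1 / sqrt (real n)) ^ D) / c0
     \<le> (K ^ p * M1 + F1 * M0 + F2 * Qi) * P / c0"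
    using c0 by (intro divide_right_mono) auto
  then show ?thesis unfolding P_def F1_def F2_def by simp
qed



theorem lemma1:
  fixes \<pi>0 :: "real^'d \<Rightarrow> real"
    and S0 :: "(real^'d) set"
    and \<Phi> :: "nat \<Rightarrow> real^'d \<Rightarrow> real"
    and I :: "nat \<Rightarrow> real^'d \<Rightarrow> real"
    and xn :: "nat \<Rightarrow> real^'d"
    and p :: nat
  assumes dens_meas: "\<pi>0 \<in> borel_measurable lborel"
    and dens_nonneg: "\<And>x. \<pi>0 x \<ge> 0"
    and dens_prob: "(\<integral>\<^sup>+ x. ennreal (\<pi>0 x) \<partial>lborel) = 1"
    and S0_def: "S0 = {x. \<pi>0 x > 0}"
    and Z_pos: "\<And>n. n \<ge> 1 \<Longrightarrow> 0 < (\<integral>\<^sup>+ x \<in> S0. ennreal (exp (- real n * \<Phi> n x) * \<pi>0 x) \<partial>lborel)"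
    and Z_fin: "\<And>n. n \<ge> 1 \<Longrightarrow> (\<integral>\<^sup>+ x \<in> S0. ennreal (exp (- real n * \<Phi> n x) * \<pi>0 x) \<partial>lborel) < \<infinity>"
    and I_def: "\<And>n x. I n x = \<Phi> n x - (1 / real n) * ln (\<pi>0 x)"
    \<comment> \<open>(A1)\<close>
    and A1_C2_Phi: "\<And>n. n \<ge> 1 \<Longrightarrow> C2_on S0 (\<Phi> n)"
    and A1_C2_pi0: "C2_on S0 \<pi>0"
    and A1_xn_in: "\<And>n. n \<ge> 1 \<Longrightarrow> xn n \<in> S0"
    and A1_min: "\<And>n y. n \<ge> 1 \<Longrightarrow> y \<in> S0 \<Longrightarrow> I n (xn n) \<le> I n y"
    and A1_unique: "\<And>n y. n \<ge> 1 \<Longrightarrow> y \<in> S0 \<Longrightarrow> I n y = I n (xn n) \<Longrightarrow> y = xn n"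
    and A1_zero: "\<And>n. n \<ge> 1 \<Longrightarrow> I n (xn n) = 0"
    and A1_grad: "\<And>n. n \<ge> 1 \<Longrightarrow> Dfr (I n) (xn n) = 0"
    and A1_hess: "\<And>n. n \<ge> 1 \<Longrightarrow> pos_def_form (Dfr (Dfr (I n)) (xn n))"
    \<comment> \<open>(A2)\<close>
    and A2_C3_Phi: "\<And>n. n \<ge> 1 \<Longrightarrow> C3_on S0 (\<Phi> n)"
    and A2_C3_pi0: "C3_on S0 \<pi>0"
    and A2_i_x: "\<exists>xs\<in>S0. xn \<longlonglongrightarrow> xs"
    and A2_i_H: "\<exists>H. (\<lambda>n. Dfr (Dfr (\<Phi> n)) (xn n)) \<longlonglongrightarrow> H \<and> pos_def_form H"
    and A2_ii: "\<And>r. r > 0 \<Longrightarrow> \<exists>nr \<ge> 1. \<exists>\<delta> > 0. \<exists>K. \<forall>n \<ge> nr.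
         (\<forall>y\<in>S0. norm (y - xn n) > r \<longrightarrow> I n y \<ge> \<delta>) \<and>
         (\<forall>y\<in>S0. norm y \<le> r \<longrightarrow>
             norm (Dfr (Dfr (Dfr (\<lambda>z. ln (\<pi>0 z)))) y) \<le> K \<and> norm (Dfr (Dfr (Dfr (\<Phi> n))) y) \<le> K)"
    and A2_iii: "\<exists>n0 \<ge> 1. \<exists>\<epsilon> q. 0 < \<epsilon> \<and> \<epsilon> < 1 \<and> (\<forall>y\<in>S0. q y \<ge> 0) \<and>
         (\<forall>n \<ge> n0. \<forall>y\<in>S0. exp (- real n * I n y) \<le> q y) \<and>
         set_integrable lborel S0 (\<lambda>y. q y powr (1 - \<epsilon>))"
    and p_pos: "p \<ge> 1"
  shows
    "let \<pi>n = (\<lambda>n x. if x \<in> S0 then exp (- real n * \<Phi> n x) * \<pi>0 x else 0);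
         \<pi>t = (\<lambda>n x. exp (- (real n / 2) * blinfun_apply (blinfun_apply (Dfr (Dfr (I n)) (xn n)) (x - xn n)) (x - xn n)));
         L = (\<lambda>n. density lborel (\<lambda>x. ennreal (\<pi>t n x / (\<integral>y. \<pi>t n y \<partial>lborel))));
         g = (\<lambda>n x. \<bar>(\<pi>n n x / \<pi>t n x) powr (1 / real p) - 1\<bar> ^ p)
     in (\<forall>\<^sub>F n in at_top. integrable (L n) (g n)) \<and>
        (\<lambda>n. \<integral>x. g n x \<partial>(L n)) \<in> O(\<lambda>n. real n powr (- real p / 2))"
proof -
  have S0o: "open S0" using A1_C2_pi0 unfolding C2_on_def by blast
  have pi0pos: "\<And>y. y \<in> S0 \<Longrightarrow> \<pi>0 y > 0" using S0_def by auto
  have D3pi: "D3 S0 \<pi>0" by (rule C3_D3[OF A2_C3_pi0])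
  have D3ln: "D3 S0 (\<lambda>z. ln (\<pi>0 z))" by (rule D3_ln[OF D3pi pi0pos])
  have D3Phi: "D3 S0 (\<Phi> n)" if "n \<ge> 1" for n using C3_D3 A2_C3_Phi that by blast
  have Ieq: "I n = (\<lambda>z. \<Phi> n z - (1 / real n) *\<^sub>R ln (\<pi>0 z))" for n by (simp add: fun_eq_iff I_def)
  have D3I: "D3 S0 (I n)" if "n \<ge> 1" for n
    unfolding Ieq by (rule D3_lin(1)[OF D3Phi[OF that] D3ln])
  have D2I: "Dfr (Dfr (I n)) y = Dfr (Dfr (\<Phi> n)) y - (1 / real n) *\<^sub>R Dfr (Dfr (\<lambda>z. ln (\<pi>0 z))) y"
    if "n \<ge> 1" "y \<in> S0" for n y
    unfolding Ieq by (rule D3_lin(3)[OF D3Phi[OF that(1)] D3ln that(2)])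
  have D3Ieq: "Dfr (Dfr (Dfr (I n))) y = Dfr (Dfr (Dfr (\<Phi> n))) y - (1 / real n) *\<^sub>R Dfr (Dfr (Dfr (\<lambda>z. ln (\<pi>0 z)))) y"
    if "n \<ge> 1" "y \<in> S0" for n y
    unfolding Ieq by (rule D3_lin(4)[OF D3Phi[OF that(1)] D3ln that(2)])
  obtain xs where xs: "xs \<in> S0" "xn \<longlonglongrightarrow> xs" using A2_i_x by blast
  obtain H where H: "(\<lambda>n. Dfr (Dfr (\<Phi> n)) (xn n)) \<longlonglongrightarrow> H" "pos_def_form H" using A2_i_H by blast
  define A where "A n = Dfr (Dfr (I n)) (xn n)" for n
  define D2ln where "D2ln = Dfr (Dfr (\<lambda>z. ln (\<pi>0 z)))"
  have contD2: "isCont D2ln xs"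
    using D3ln xs(1) unfolding D3_def D2ln_def by (auto intro: differentiable_imp_continuous_within)
  have lim1: "(\<lambda>n. D2ln (xn n)) \<longlonglongrightarrow> D2ln xs" by (rule isCont_tendsto_compose[OF contD2 xs(2)])
  have lim2: "(\<lambda>n. (1 / real n) *\<^sub>R D2ln (xn n)) \<longlonglongrightarrow> 0"
    using tendsto_scaleR[OF lim_inverse_n' lim1] by simp
  have lim3: "(\<lambda>n. Dfr (Dfr (\<Phi> n)) (xn n) - (1 / real n) *\<^sub>R D2ln (xn n)) \<longlonglongrightarrow> H"
    using tendsto_diff[OF H(1) lim2] by simp
  have Alim: "A \<longlonglongrightarrow> H"
  proof (rule Lim_transform_eventually[OF lim3])
    show "\<forall>\<^sub>F n in sequentially. Dfr (Dfr (\<Phi> n)) (xn n) - (1 / real n) *\<^sub>R D2ln (xn n) = A n"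
      unfolding eventually_sequentially A_def D2ln_def using D2I A1_xn_in by (intro exI[of _ 1]) auto
  qed
  obtain c where c: "c > 0" "\<And>v. H v v \<ge> c * norm v ^ 2" using pd_uniform[OF H(2)] by blast
  define lam where "lam = c / 2"
  define Lam where "Lam = norm H + c / 2"
  have lam: "lam > 0" unfolding lam_def using c by simp
  have Lam: "Lam > 0" unfolding Lam_def using c by (simp add: add_nonneg_pos)
  have evA: "\<forall>\<^sub>F n in sequentially. norm (A n - H) < c / 2"
  proof -
    have "c / 2 > 0" using c by simp
    then show ?thesis using Alim unfolding tendsto_iff dist_norm by blast
  qed
  have Abnd: "lam * norm v ^ 2 \<le> A n v v \<and> A n v v \<le> Lam * norm v ^ 2" if "norm (A n - H) < c / 2" for n v
  proof -
    define N where "N = norm v ^ 2"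
    have N: "N \<ge> 0" unfolding N_def by simp
    have e: "A n v v = H v v + (A n - H) v v" by (simp add: blinfun.diff_left)
    have "\<bar>(A n - H) v v\<bar> \<le> norm (A n - H) * N" unfolding N_def by (rule qf_bound)
    also have "\<dots> \<le> (c / 2) * N" using that N by (intro mult_right_mono) auto
    finally have b: "\<bar>(A n - H) v v\<bar> \<le> c * N / 2" by simp
    have h1: "c * N \<le> H v v" using c(2)[of v] unfolding N_def .
    have h2: "H v v \<le> norm H * N" using qf_bound[of H v] unfolding N_def by linarith
    have l1: "lam * N = c * N / 2" unfolding lam_def by simp
    have l2: "Lam * N = norm H * N + c * N / 2" unfolding Lam_def by (simp add: algebra_simps)
    show ?thesis unfolding N_def[symmetric] l1 l2 e using b h1 h2 by linarith
  qed
  obtain \<rho>0 where \<rho>0: "\<rho>0 > 0" "ball xs \<rho>0 \<subseteq> S0" using S0o xs(1) by (rule openE)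
  define r1 where "r1 = norm xs + \<rho>0"
  have r1: "r1 > 0" unfolding r1_def using \<rho>0 by (simp add: add_nonneg_pos)
  obtain nr1 K1 where nr1: "nr1 \<ge> 1"
    and K1: "\<And>n y. n \<ge> nr1 \<Longrightarrow> y \<in> S0 \<Longrightarrow> norm y \<le> r1 \<Longrightarrow>
       norm (Dfr (Dfr (Dfr (\<lambda>z. ln (\<pi>0 z)))) y) \<le> K1 \<and> norm (Dfr (Dfr (Dfr (\<Phi> n))) y) \<le> K1"
    using A2_ii[OF r1] by blast
  define K where "K = \<bar>K1\<bar>"
  have K: "K \<ge> 0" unfolding K_def by simp
  define \<rho> where "\<rho> = min (\<rho>0 / 2) (lam / (4 * (K + 1)))"
  have \<rho>: "\<rho> > 0" "\<rho> \<le> \<rho>0 / 2" "K * \<rho> \<le> lam / 4"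
  proof -
    show "\<rho> > 0" unfolding \<rho>_def using \<rho>0 lam K by simp
    show "\<rho> \<le> \<rho>0 / 2" unfolding \<rho>_def by (rule min.cobounded1)
    have "K * \<rho> \<le> K * (lam / (4 * (K + 1)))" unfolding \<rho>_def using K by (intro mult_left_mono) auto
    also have "\<dots> = (lam / 4) * (K / (K + 1))" using K by (simp add: field_simps)
    also have "\<dots> \<le> (lam / 4) * 1" using K lam by (intro mult_left_mono) auto
    finally show "K * \<rho> \<le> lam / 4" by simp
  qed
  have r2: "\<rho> / 2 > 0" using \<rho> by simp
  obtain nr2 \<delta> where nr2: "nr2 \<ge> 1" and \<delta>: "\<delta> > 0"
    and tail: "\<And>n y. n \<ge> nr2 \<Longrightarrow> y \<in> S0 \<Longrightarrow> norm (y - xn n) > \<rho> / 2 \<Longrightarrow> I n y \<ge> \<delta>"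
    using A2_ii[OF r2] by blast
  obtain n0 \<epsilon> q where n0: "n0 \<ge> 1" and eps: "0 < \<epsilon>" "\<epsilon> < 1" and qnn: "\<forall>y\<in>S0. q y \<ge> 0"
    and qb: "\<And>n y. n \<ge> n0 \<Longrightarrow> y \<in> S0 \<Longrightarrow> exp (- real n * I n y) \<le> q y"
    and qsi: "set_integrable lborel S0 (\<lambda>y. q y powr (1 - \<epsilon>))"
    using A2_iii by blast
  have qint': "integrable lborel (\<lambda>y. indicator S0 y * q y powr (1 - \<epsilon>))"
    using qsi unfolding set_integrable_def by simp
  have qmeas: "(\<lambda>y. indicator S0 y * q y powr (1 - \<epsilon>)) \<in> borel_measurable borel"
    using borel_measurable_integrable[OF qint'] by simp
  define Qi where "Qi = enn2real (\<integral>\<^sup>+y. ennreal (indicator S0 y * q y powr (1 - \<epsilon>)) \<partial>lborel)"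
  have qfin: "(\<integral>\<^sup>+y. ennreal (indicator S0 y * q y powr (1 - \<epsilon>)) \<partial>lborel) < \<infinity>"
  proof -
    have nrm: "norm (indicator S0 y * q y powr (1 - \<epsilon>)) = indicator S0 y * q y powr (1 - \<epsilon>)" for y
      by (simp add: indicator_def)
    show ?thesis using qint' unfolding integrable_iff_bounded nrm by simp
  qed
  have qint: "(\<integral>\<^sup>+y. ennreal (indicator S0 y * q y powr (1 - \<epsilon>)) \<partial>lborel) = ennreal Qi"
    unfolding Qi_def using qfin by (simp add: ennreal_enn2real less_top)
  have Qi_nn: "Qi \<ge> 0" unfolding Qi_def by (simp add: enn2real_nonneg)
  have evx: "\<forall>\<^sub>F n in sequentially. dist (xn n) xs < \<rho> / 2" using xs(2) r2 unfolding tendsto_iff by blast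
  have evN: "\<forall>\<^sub>F n in sequentially. n \<ge> max (max nr1 nr2) n0" by (rule eventually_ge_at_top)
  define M1 where "M1 = enn2real (\<integral>\<^sup>+u. ennreal (norm u ^ (3 * p) * exp (- (lam / 4) * norm u ^ 2)) \<partial>(lborel::(real^'d) measure))"
  define M0 where "M0 = enn2real (\<integral>\<^sup>+u. ennreal (norm u ^ 0 * exp (- (lam / 4) * norm u ^ 2)) \<partial>(lborel::(real^'d) measure))"
  define c0 where "c0 = enn2real (\<integral>\<^sup>+u. ennreal (norm u ^ 0 * exp (- (Lam / 2) * norm u ^ 2)) \<partial>(lborel::(real^'d) measure))"
  have c0: "c0 > 0" unfolding c0_def using Lam by (intro gauss_pos) simp
  have M1nn: "M1 \<ge> 0" and M0nn: "M0 \<ge> 0" unfolding M1_def M0_def by (simp_all add: enn2real_nonneg)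
  define a1 where "a1 = (lam / 4) * \<rho> ^ 2"
  define a2 where "a2 = \<epsilon> * \<delta>"
  have a1: "a1 > 0" unfolding a1_def using lam \<rho> by simp
  have a2: "a2 > 0" unfolding a2_def using eps \<delta> by simp
  define C where "C = (K ^ p * M1 + fact (CARD('d) + p) / a1 ^ (CARD('d) + p) * M0 + fact (CARD('d) + p) / a2 ^ (CARD('d) + p) * Qi) / c0"
  have key: "integrable (density lborel (\<lambda>x. ennreal (exp (- (real n / 2) * A n (x - xn n) (x - xn n)) /
              (\<integral>y. exp (- (real n / 2) * A n (y - xn n) (y - xn n)) \<partial>lborel))))
         (\<lambda>x. \<bar>((if x \<in> S0 then exp (- real n * \<Phi> n x) * \<pi>0 x else 0) / exp (- (real n / 2) * A n (x - xn n) (x - xn n))) powr (1 / real p) - 1\<bar> ^ p)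
     \<and> (\<integral>x. \<bar>((if x \<in> S0 then exp (- real n * \<Phi> n x) * \<pi>0 x else 0) / exp (- (real n / 2) * A n (x - xn n) (x - xn n))) powr (1 / real p) - 1\<bar> ^ p
          \<partial>density lborel (\<lambda>x. ennreal (exp (- (real n / 2) * A n (x - xn n) (x - xn n)) /
              (\<integral>y. exp (- (real n / 2) * A n (y - xn n) (y - xn n)) \<partial>lborel)))) \<le> C * real n powr (- real p / 2)"
    if nN: "n \<ge> max (max nr1 nr2) n0" and nx: "dist (xn n) xs < \<rho> / 2" and nA: "norm (A n - H) < c / 2" for n
  proof -
    have n1: "n \<ge> 1" using nN n0 by simp
    have nnr1: "n \<ge> nr1" and nnr2: "n \<ge> nr2" and nn0: "n \<ge> n0" using nN by auto
    have xnS: "xn n \<in> S0" by (rule A1_xn_in[OF n1])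
    have Icont: "continuous_on S0 (I n)"
      using D3I[OF n1] unfolding D3_def
      by (intro continuous_at_imp_continuous_on) (auto intro: differentiable_imp_continuous_within)
    have inS: "xn n + h \<in> S0" and inr: "norm (xn n + h) \<le> r1" if "norm h < 3 * \<rho> / 2" for h
    proof -
      have "dist (xn n + h) xs \<le> dist (xn n) xs + norm h" by (simp add: dist_norm norm_triangle_sub[of "xn n + h - xs"] )
        (metis add.commute add_diff_eq dist_norm dist_triangle2 norm_minus_commute dist_commute diff_add_cancel
           add_diff_cancel_left' norm_triangle_ineq)
      also have "\<dots> < \<rho> / 2 + 3 * \<rho> / 2" using nx that by simp
      also have "\<dots> \<le> \<rho>0" using \<rho> by simp
      finally have d: "dist (xn n + h) xs < \<rho>0" .
      then show "xn n + h \<in> S0" using \<rho>0(2) by (auto simp: dist_commute)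
      have "norm (xn n + h) \<le> norm xs + dist (xn n + h) xs"
        by (metis dist_norm norm_triangle_sub add.commute)
      then show "norm (xn n + h) \<le> r1" unfolding r1_def using d by simp
    qed
    have tay: "\<bar>I n (xn n + h) - A n h h / 2\<bar> \<le> K * norm h ^ 3" if hr: "norm h < \<rho>" for h
    proof -
      have seg: "xn n + t *\<^sub>R h \<in> S0 \<and> norm (xn n + t *\<^sub>R h) \<le> r1" if "0 \<le> t" "t \<le> 1" for t
      proof -
        have "norm (t *\<^sub>R h) \<le> norm h" using that by (simp add: mult_left_le_one_le)
        then have "norm (t *\<^sub>R h) < 3 * \<rho> / 2" using hr \<rho> by simp
        then show ?thesis using inS inr by blast
      qed
      have bnd3: "norm (Dfr (Dfr (Dfr (I n))) (xn n + t *\<^sub>R h)) \<le> 2 * K" if "0 \<le> t" "t \<le> 1" for t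
      proof -
        let ?y = "xn n + t *\<^sub>R h"
        have y: "?y \<in> S0" "norm ?y \<le> r1" using seg[OF that] by auto
        have k: "norm (Dfr (Dfr (Dfr (\<lambda>z. ln (\<pi>0 z)))) ?y) \<le> K" "norm (Dfr (Dfr (Dfr (\<Phi> n))) ?y) \<le> K"
          using K1[OF nnr1 y] unfolding K_def by auto
        have "norm (Dfr (Dfr (Dfr (I n))) ?y) \<le> norm (Dfr (Dfr (Dfr (\<Phi> n))) ?y) + norm ((1 / real n) *\<^sub>R Dfr (Dfr (Dfr (\<lambda>z. ln (\<pi>0 z)))) ?y)"
          unfolding D3Ieq[OF n1 y(1)] by (rule norm_triangle_ineq4)
        also have "norm ((1 / real n) *\<^sub>R Dfr (Dfr (Dfr (\<lambda>z. ln (\<pi>0 z)))) ?y) \<le> norm (Dfr (Dfr (Dfr (\<lambda>z. ln (\<pi>0 z)))) ?y)"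
          using divide_left_mono[of 1 "real n" "norm (Dfr (Dfr (Dfr (\<lambda>z. ln (\<pi>0 z)))) ?y)"] n1 by simp
        finally show ?thesis using k by simp
      qed
      have T: "\<bar>I n (xn n + h) - I n (xn n) - Dfr (I n) (xn n) h - Dfr (Dfr (I n)) (xn n) h h / 2\<bar> \<le> 2 * K * norm h ^ 3 / 6"
        by (rule taylor3[OF D3I[OF n1]]) (use seg bnd3 in auto)
      then have "\<bar>I n (xn n + h) - A n h h / 2\<bar> \<le> 2 * K * norm h ^ 3 / 6"
        unfolding A_def using A1_zero[OF n1] A1_grad[OF n1] by simp
      also have "\<dots> \<le> K * norm h ^ 3" using K by simp
      finally show ?thesis .
    qed
    have ball': "xn n + h \<in> S0" if "norm h < \<rho>" for h using inS[of h] that \<rho> by simp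
    have tail': "I n y \<ge> \<delta>" if "y \<in> S0" "norm (y - xn n) \<ge> \<rho>" for y
      using tail[OF nnr2 that(1)] that(2) \<rho> by simp
    have Alow: "lam * norm v ^ 2 \<le> A n v v" and Aup: "A n v v \<le> Lam * norm v ^ 2" for v
      using Abnd[OF nA, of v] by auto
    have qb': "exp (- real n * I n y) \<le> q y" if "y \<in> S0" for y using qb[OF nn0 that] .
    note R = per_n[OF n1 p_pos S0o Icont lam Lam Alow Aup \<rho>(1) K \<rho>(3) ball' tay tail' \<delta> eps qb' qmeas qint Qi_nn]
    have fx: "(if x \<in> S0 then exp (- real n * I n x) else 0) = (if x \<in> S0 then exp (- real n * \<Phi> n x) * \<pi>0 x else 0)" for x
    proof (cases "x \<in> S0")
      case True
      have e: "- real n * I n x = - real n * \<Phi> n x + ln (\<pi>0 x)" unfolding I_def using n1 by (simp add: algebra_simps)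
      have "exp (- real n * I n x) = exp (- real n * \<Phi> n x) * \<pi>0 x"
        unfolding e exp_add using pi0pos[OF True] by simp
      then show ?thesis using True by simp
    qed simp
    have R': "integrable (density lborel (\<lambda>x. ennreal (exp (- (real n / 2) * A n (x - xn n) (x - xn n)) /
              (\<integral>y. exp (- (real n / 2) * A n (y - xn n) (y - xn n)) \<partial>lborel))))
         (\<lambda>x. \<bar>((if x \<in> S0 then exp (- real n * \<Phi> n x) * \<pi>0 x else 0) / exp (- (real n / 2) * A n (x - xn n) (x - xn n))) powr (1 / real p) - 1\<bar> ^ p)
     \<and> (\<integral>x. \<bar>((if x \<in> S0 then exp (- real n * \<Phi> n x) * \<pi>0 x else 0) / exp (- (real n / 2) * A n (x - xn n) (x - xn n))) powr (1 / real p) - 1\<bar> ^ p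
          \<partial>density lborel (\<lambda>x. ennreal (exp (- (real n / 2) * A n (x - xn n) (x - xn n)) /
              (\<integral>y. exp (- (real n / 2) * A n (y - xn n) (y - xn n)) \<partial>lborel)))) \<le>
        (K ^ p * (1 / sqrt (real n)) ^ p * M1 + exp (- real n * (lam / 4) * \<rho> ^ 2) * M0 + exp (- real n * \<epsilon> * \<delta>) * Qi / (1 / sqrt (real n)) ^ DIM(real^'d)) / c0"
      using R unfolding M1_def M0_def c0_def by (simp only: fx)
    have bl: "(K ^ p * (1 / sqrt (real n)) ^ p * M1 + exp (- real n * (lam / 4) * \<rho> ^ 2) * M0 + exp (- real n * \<epsilon> * \<delta>) * Qi / (1 / sqrt (real n)) ^ DIM(real^'d)) / c0
        \<le> C * real n powr (- real p / 2)"
    proof -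
      have e1: "exp (- real n * (lam / 4) * \<rho> ^ 2) = exp (- real n * a1)" unfolding a1_def by (simp add: mult.assoc)
      have e2: "exp (- real n * \<epsilon> * \<delta>) = exp (- real n * a2)" unfolding a2_def by (simp add: mult.assoc)
      show ?thesis unfolding e1 e2 C_def
        using bnd_le[OF n1 a1 a2 M0nn Qi_nn c0 K M1nn, of p "CARD('d)"] by simp
    qed
    show ?thesis using R' bl by linarith
  qed
  have ev: "\<forall>\<^sub>F n in sequentially. n \<ge> max (max nr1 nr2) n0 \<and> dist (xn n) xs < \<rho> / 2 \<and> norm (A n - H) < c / 2"
    unfolding eventually_conj_iff using evN evx evA by blast
  show ?thesis
    unfolding Let_def A_def[symmetric]
  proof
    show "\<forall>\<^sub>F n in sequentially. integrable (density lborel (\<lambda>x. ennreal (exp (- (real n / 2) * A n (x - xn n) (x - xn n)) /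
              (\<integral>y. exp (- (real n / 2) * A n (y - xn n) (y - xn n)) \<partial>lborel))))
         (\<lambda>x. \<bar>((if x \<in> S0 then exp (- real n * \<Phi> n x) * \<pi>0 x else 0) / exp (- (real n / 2) * A n (x - xn n) (x - xn n))) powr (1 / real p) - 1\<bar> ^ p)"
      using ev by eventually_elim (use key in blast)
    show "(\<lambda>n. \<integral>x. \<bar>((if x \<in> S0 then exp (- real n * \<Phi> n x) * \<pi>0 x else 0) / exp (- (real n / 2) * A n (x - xn n) (x - xn n))) powr (1 / real p) - 1\<bar> ^ p
          \<partial>density lborel (\<lambda>x. ennreal (exp (- (real n / 2) * A n (x - xn n) (x - xn n)) /
              (\<integral>y. exp (- (real n / 2) * A n (y - xn n) (y - xn n)) \<partial>lborel))))
       \<in> O(\<lambda>n. real n powr (- real p / 2))"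
    proof (rule bigoI[where c = C])
      show "\<forall>\<^sub>F n in at_top. norm (\<integral>x. \<bar>((if x \<in> S0 then exp (- real n * \<Phi> n x) * \<pi>0 x else 0) / exp (- (real n / 2) * A n (x - xn n) (x - xn n))) powr (1 / real p) - 1\<bar> ^ p
          \<partial>density lborel (\<lambda>x. ennreal (exp (- (real n / 2) * A n (x - xn n) (x - xn n)) /
              (\<integral>y. exp (- (real n / 2) * A n (y - xn n) (y - xn n)) \<partial>lborel))))
          \<le> C * norm (real n powr (- real p / 2))"
        using ev
      proof eventually_elim
        case (elim n)
        have k: "(\<integral>x. \<bar>((if x \<in> S0 then exp (- real n * \<Phi> n x) * \<pi>0 x else 0) / exp (- (real n / 2) * A n (x - xn n) (x - xn n))) powr (1 / real p) - 1\<bar> ^ p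
          \<partial>density lborel (\<lambda>x. ennreal (exp (- (real n / 2) * A n (x - xn n) (x - xn n)) /
              (\<integral>y. exp (- (real n / 2) * A n (y - xn n) (y - xn n)) \<partial>lborel)))) \<le> C * real n powr (- real p / 2)"
          using key elim by blast
        have nn: "0 \<le> (\<integral>x. \<bar>((if x \<in> S0 then exp (- real n * \<Phi> n x) * \<pi>0 x else 0) / exp (- (real n / 2) * A n (x - xn n) (x - xn n))) powr (1 / real p) - 1\<bar> ^ p
          \<partial>density lborel (\<lambda>x. ennreal (exp (- (real n / 2) * A n (x - xn n) (x - xn n)) /
              (\<integral>y. exp (- (real n / 2) * A n (y - xn n) (y - xn n)) \<partial>lborel))))"
          by (rule integral_nonneg_AE) simp
        show ?case using k nn by simp
      qed
    qed
  qed
qed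


end
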